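(* The Hermitian $\mathcal E$-lattices $L=\Lambda\oplus H$ and $E_8^{\mathcal E}\oplus E_8^{\mathcal E}\oplus E_8^{\mathcal E}\oplus H$ are isometric.
   Context: Let $\omega=e^{2\pi i/3}$, $\mathcal E=\mathbb Z[\omega]$, $\theta=\omega-\bar\omega=\sqrt{-3}$; Hermitian forms are conjugate-linear in the first variable. Identify $\mathcal E/\theta\mathcal E=\mathbb F_3$. The complex Leech lattice $\Lambda\subset\mathcal E^{12}$ is the set of vectors $(m+\theta c_i+3z_i)_{i=1}^{12}$ with $m\in\{0,1,-1\}$, $c=(c_i)\in\{0,\pm1\}^{12}$ reducing mod $\theta$ to a codeword of the ternary Golay code $\mathcal C_{12}$, $z_i\in\mathcal E$ and $\sum_i z_i\equiv m\pmod\theta$; here $\mathcal C_{12}\subset\mathbb F_3^{12}$ has generator matrix $[I_6\mid A]$ with rows of $A$ equal to $(0,1,1,1,1,1)$, $(-1,0,1,-1,-1,1)$, $(-1,1,0,1,-1,-1)$, $(-1,-1,1,0,1,-1)$, $(-1,-1,-1,1,0,1)$, $(-1,1,-1,-1,1,0)$. The form on $\Lambda$ is $\langle u,v\rangle=-\frac13\sum\bar u_iv_i$. $H$ is $\mathcal E^2$ with $\langle u,v\rangle=u^*\begin{pmatrix}0&\bar\theta\\ \theta&0\end{pmatrix}v$. $L=\Lambda\oplus H$ (orthogonal direct sum). $E_8^{\mathcal E}=\{v\in\mathcal E^4: v\bmod\theta\in\mathcal C_4\}$ with $\langle u,v\rangle=-\sum\bar u_iv_i$, where the tetracode $\mathcal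 C_4\subset\mathbb F_3^4$ is spanned by $(1,1,-1,0)$ and $(0,1,1,1)$. *)

theory Defs
  imports Complex_Main
begin

definition omega :: complex where
  "omega = cis (2 * pi / 3)"

definition theta :: complex where
  "theta = omega - cnj omega"

definition Eis :: "complex set" where
  "Eis = {of_int a + of_int b * omega | a b. True}"

definition cong_theta :: "complex \<Rightarrow> complex \<Rightarrow> bool" where
  "cong_theta x y \<longleftrightarrow> (\<exists>e\<in>Eis. x - y = theta * e)"

definition Evecs :: "nat \<Rightarrow> complex list set" where
  "Evecs n = {v. length v = n \<and> set v \<subseteq> Eis}"

definition vadd :: "complex list \<Rightarrow> complex list \<Rightarrow> complex list" where
  "vadd u v = map2 (+) u v"

definition vscale :: "complex \<Rightarrow> complex list \<Rightarrow> complex list" where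
  "vscale a v = map ((*) a) v"

definition std_herm :: "complex list \<Rightarrow> complex list \<Rightarrow> complex" where
  "std_herm u v = (\<Sum>i<length u. cnj (u ! i) * v ! i)"

section \<open>Codes over F_3 (entries represented by integers 0,1,2)\<close>

definition golayA :: "int list list" where
  "golayA = [[0,1,1,1,1,1], [-1,0,1,-1,-1,1], [-1,1,0,1,-1,-1],
             [-1,-1,1,0,1,-1], [-1,-1,-1,1,0,1], [-1,1,-1,-1,1,0]]"

text \<open>generator matrix [I_6 | A]\<close>
definition golayG :: "int list list" where
  "golayG = map (\<lambda>i. map (\<lambda>j. if j = i then 1 else 0) [0..<6] @ golayA ! i) [0..<6]"

definition golay12 :: "int list set" where
  "golay12 = {map (\<lambda>j. (\<Sum>i<6. a i * (golayG ! i ! j)) mod 3) [0..<12] | a. True}"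

definition tetracode :: "int list set" where
  "tetracode = {map (\<lambda>j. (a * ([1,1,-1,0] ! j) + b * ([0,1,1,1] ! j)) mod 3) [0..<4] | a b. True}"

definition reduces_to :: "complex list \<Rightarrow> int list \<Rightarrow> bool" where
  "reduces_to v w \<longleftrightarrow> length v = length w \<and>
     (\<forall>i<length v. cong_theta (v ! i) (of_int (w ! i)))"

definition Leech :: "complex list set" where
  "Leech = {v. length v = 12 \<and>
     (\<exists>(m::int) (c::int list) (z::complex list).
        m \<in> {0, 1, -1} \<and> length c = 12 \<and> set c \<subseteq> {0, 1, -1} \<and>
        (\<exists>w\<in>golay12. reduces_to (map of_int c) w) \<and>
        z \<in> Evecs 12 \<and> cong_theta (sum_list z) (of_int m) \<and>
        (\<forall>i<12. v ! i = of_int m + theta * of_int (c ! i) + 3 * z ! i))}"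

definition Leech_form :: "complex list \<Rightarrow> complex list \<Rightarrow> complex" where
  "Leech_form u v = - (1/3) * std_herm u v"

definition Hplane :: "complex list set" where
  "Hplane = Evecs 2"

definition H_form :: "complex list \<Rightarrow> complex list \<Rightarrow> complex" where
  "H_form u v = cnj (u ! 0) * cnj theta * v ! 1 + cnj (u ! 1) * theta * v ! 0"

definition E8E :: "complex list set" where
  "E8E = {v \<in> Evecs 4. \<exists>w\<in>tetracode. reduces_to v w}"

definition E8_form :: "complex list \<Rightarrow> complex list \<Rightarrow> complex" where
  "E8_form u v = - std_herm u v"

definition Lbig :: "complex list set" where
  "Lbig = {u @ h | u h. u \<in> Leech \<and> h \<in> Hplane}"

definition Lbig_form :: "complex list \<Rightarrow> complex list \<Rightarrow> complex" where
  "Lbig_form x y = Leech_form (take 12 x) (take 12 y) + H_form (drop 12 x) (drop 12 y)"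

definition E8cubeH :: "complex list set" where
  "E8cubeH = {a @ b @ c @ h | a b c h. a \<in> E8E \<and> b \<in> E8E \<and> c \<in> E8E \<and> h \<in> Hplane}"

definition E8cubeH_form :: "complex list \<Rightarrow> complex list \<Rightarrow> complex" where
  "E8cubeH_form x y =
     E8_form (take 4 x) (take 4 y)
   + E8_form (take 4 (drop 4 x)) (take 4 (drop 4 y))
   + E8_form (take 4 (drop 8 x)) (take 4 (drop 8 y))
   + H_form (drop 12 x) (drop 12 y)"

definition isometric ::
  "complex list set \<Rightarrow> (complex list \<Rightarrow> complex list \<Rightarrow> complex) \<Rightarrow>
   complex list set \<Rightarrow> (complex list \<Rightarrow> complex list \<Rightarrow> complex) \<Rightarrow> bool" where
  "isometric L fL M fM \<longleftrightarrow> (\<exists>f. bij_betw f L M \<and>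
     (\<forall>u\<in>L. \<forall>v\<in>L. \<forall>a\<in>Eis. \<forall>b\<in>Eis.
        f (vadd (vscale a u) (vscale b v)) = vadd (vscale a (f u)) (vscale b (f v))) \<and>
     (\<forall>u\<in>L. \<forall>v\<in>L. fM (f u) (f v) = fL u v))"

end

theory Submission
  imports Defs
begin

lemma omega_alt: "omega = Complex (-1/2) (sqrt 3 / 2)"
  unfolding omega_def cis.ctr using cos_120 sin_120 by simp

lemma Re_omega[simp]: "Re omega = -1/2" and Im_omega[simp]: "Im omega = sqrt 3 / 2"
  by (simp_all add: omega_alt)

lemma omega_sq: "omega * omega = -1 - omega"
  by (simp add: complex_eq_iff algebra_simps)

lemma cnj_omega: "cnj omega = -1 - omega"
  by (simp add: complex_eq_iff)

lemma theta_eq: "theta = 1 + 2 * omega"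
  unfolding theta_def cnj_omega by simp

definition emb :: "int \<Rightarrow> int \<Rightarrow> complex" where
  "emb a b = of_int a + of_int b * omega"

lemma emb_add: "emb a b + emb c d = emb (a + c) (b + d)"
  by (simp add: emb_def algebra_simps)

lemma emb_mult: "emb a b * emb c d = emb (a * c - b * d) (a * d + b * c - b * d)"
proof -
  have "emb a b * emb c d = of_int (a*c) + of_int (a*d + b*c) * omega + of_int (b*d) * (omega * omega)"
    by (simp add: emb_def algebra_simps)
  also have "\<dots> = emb (a * c - b * d) (a * d + b * c - b * d)"
    unfolding omega_sq by (simp add: emb_def algebra_simps)
  finally show ?thesis .
qed

lemma emb_uminus: "- emb a b = emb (-a) (-b)"
  by (simp add: emb_def algebra_simps)

lemma emb_diff: "emb a b - emb c d = emb (a - c) (b - d)"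
  by (simp add: emb_def algebra_simps)

lemma cnj_emb: "cnj (emb a b) = emb (a - b) (-b)"
  by (simp add: emb_def cnj_omega algebra_simps)

lemma emb_of_int: "of_int a = emb a 0" by (simp add: emb_def)
lemma emb_omega: "omega = emb 0 1" by (simp add: emb_def)
lemma emb_theta: "theta = emb 1 2" by (simp add: emb_def theta_eq)

lemma Re_emb: "Re (emb a b) = of_int a - of_int b / 2" by (simp add: emb_def)
lemma Im_emb: "Im (emb a b) = of_int b * sqrt 3 / 2" by (simp add: emb_def)

lemma emb_inj: "emb a b = emb c d \<longleftrightarrow> a = c \<and> b = d"
proof
  assume h: "emb a b = emb c d"
  from arg_cong[OF h, of Im] have "b = d" by (simp add: Im_emb)
  moreover from arg_cong[OF h, of Re] have "of_int a - of_int b / 2 = (of_int c - of_int d / 2 :: real)"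
    by (simp add: Re_emb)
  ultimately show "a = c \<and> b = d" by simp
qed simp

lemma Eis_iff: "x \<in> Eis \<longleftrightarrow> (\<exists>a b. x = emb a b)"
  by (auto simp: Eis_def emb_def)

lemma emb_Eis[simp]: "emb a b \<in> Eis" by (auto simp: Eis_iff)

lemma Eis_E: assumes "x \<in> Eis" obtains a b where "x = emb a b"
  using assms by (auto simp: Eis_iff)

lemma Eis_add[simp]: "x \<in> Eis \<Longrightarrow> y \<in> Eis \<Longrightarrow> x + y \<in> Eis"
  by (elim Eis_E) (simp add: emb_add)
lemma Eis_mult[simp]: "x \<in> Eis \<Longrightarrow> y \<in> Eis \<Longrightarrow> x * y \<in> Eis"
  by (elim Eis_E) (simp add: emb_mult)
lemma Eis_uminus[simp]: "x \<in> Eis \<Longrightarrow> - x \<in> Eis"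
  by (elim Eis_E) (simp add: emb_uminus)
lemma Eis_diff[simp]: "x \<in> Eis \<Longrightarrow> y \<in> Eis \<Longrightarrow> x - y \<in> Eis"
  by (elim Eis_E) (simp add: emb_diff)
lemma Eis_of_int[simp]: "of_int k \<in> Eis" by (simp add: emb_of_int)
lemma Eis_0[simp]: "0 \<in> Eis" using Eis_of_int[of 0] by simp
lemma Eis_1[simp]: "1 \<in> Eis" using Eis_of_int[of 1] by simp
lemma Eis_numeral[simp]: "numeral n \<in> Eis" using Eis_of_int[of "numeral n"] by simp
lemma Eis_omega[simp]: "omega \<in> Eis" by (simp add: emb_omega)
lemma Eis_theta[simp]: "theta \<in> Eis" by (simp add: emb_theta)
lemma Eis_cnj[simp]: "x \<in> Eis \<Longrightarrow> cnj x \<in> Eis" by (elim Eis_E) (simp add: cnj_emb)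
lemma Eis_sum[simp]: "(\<And>i. i \<in> A \<Longrightarrow> f i \<in> Eis) \<Longrightarrow> sum f A \<in> Eis"
  by (induction A rule: infinite_finite_induct) auto

lemma theta_mult_emb: "theta * emb p q = emb (p - 2*q) (2*p - q)"
  by (simp add: emb_theta emb_mult)

lemma cong_theta_emb:
  "cong_theta (emb a b) (emb c d) \<longleftrightarrow> (3::int) dvd (a + b - c - d)"
proof
  assume "cong_theta (emb a b) (emb c d)"
  then obtain p q where "emb a b - emb c d = theta * emb p q"
    unfolding cong_theta_def by (auto elim!: Eis_E)
  hence "a - c = p - 2*q \<and> b - d = 2*p - q"
    by (simp add: emb_diff theta_mult_emb emb_inj)
  hence "a + b - c - d = 3 * (p - q)" by simp
  thus "(3::int) dvd (a + b - c - d)" by simp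
next
  assume "(3::int) dvd (a + b - c - d)"
  then obtain t where t: "a + b - c - d = 3 * t" by blast
  define q where "q = (b - d) - 2 * t"
  define p where "p = (a - c) + 2 * q"
  have "a - c = p - 2*q" "b - d = 2*p - q" using t by (simp_all add: p_def q_def algebra_simps)
  hence "emb a b - emb c d = theta * emb p q"
    by (simp add: emb_diff theta_mult_emb)
  thus "cong_theta (emb a b) (emb c d)" unfolding cong_theta_def by auto
qed

definition ep :: "int \<times> int \<Rightarrow> complex" where "ep p = emb (fst p) (snd p)"
definition evec :: "(int \<times> int) list \<Rightarrow> complex list" where "evec = map ep"
fun padd :: "int \<times> int \<Rightarrow> int \<times> int \<Rightarrow> int \<times> int" where "padd (a,b) (c,d) = (a+c, b+d)"
fun pmul :: "int \<times> int \<Rightarrow> int \<times> int \<Rightarrow> int \<times> int" where "pmul (a,b) (c,d) = (a*c - b*d, a*d + b*c - b*d)"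
fun pcnj :: "int \<times> int \<Rightarrow> int \<times> int" where "pcnj (a,b) = (a - b, -b)"
fun psc :: "int \<Rightarrow> int \<times> int \<Rightarrow> int \<times> int" where "psc c (a,b) = (c*a, c*b)"
definition psum :: "(int \<times> int) list \<Rightarrow> int \<times> int" where "psum xs = foldr padd xs (0,0)"
definition lc :: "complex list \<Rightarrow> complex list list \<Rightarrow> complex list" where
  "lc x G = map (\<lambda>j. \<Sum>k<length G. x!k * G!k!j) [0..<14]"
definition lcZ :: "(int \<times> int) list \<Rightarrow> (int \<times> int) list list \<Rightarrow> (int \<times> int) list" where
  "lcZ x G = map (\<lambda>j. psum (map (\<lambda>k. pmul (x!k) (G!k!j)) [0..<length G])) [0..<14]"
definition formZM :: "(int \<times> int) list \<Rightarrow> (int \<times> int) list \<Rightarrow> int \<times> int" where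
  "formZM x y = padd (psum (map (\<lambda>j. psc (-1) (pmul (pcnj (x!j)) (y!j))) [0..<12]))
      (padd (pmul (pmul (pcnj (x!12)) (-1,-2)) (y!13)) (pmul (pmul (pcnj (x!13)) (1,2)) (y!12)))"
definition GLexp :: "nat \<Rightarrow> nat \<Rightarrow> int \<times> int" where
  "GLexp i l = (if i = l \<and> i < 12 then (-27,0) else if i = 12 \<and> l = 13 then (-81,-162)
     else if i = 13 \<and> l = 12 then (81,162) else (0,0))"

definition GLnZ :: "(int \<times> int) list list" where
  "GLnZ = [
  [(4,0),(1,0),(1,0),(1,0),(1,0),(1,0),(1,0),(1,0),(1,0),(1,0),(1,0),(1,0),(0,0),(0,0)],
  [(1,2),(0,0),(0,0),(0,0),(0,0),(0,0),(0,0),(1,2),(1,2),(1,2),(1,2),(1,2),(0,0),(0,0)],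
  [(0,0),(1,2),(0,0),(0,0),(0,0),(0,0),((-1),(-2)),(0,0),(1,2),((-1),(-2)),((-1),(-2)),(1,2),(0,0),(0,0)],
  [(0,0),(0,0),(1,2),(0,0),(0,0),(0,0),((-1),(-2)),(1,2),(0,0),(1,2),((-1),(-2)),((-1),(-2)),(0,0),(0,0)],
  [(0,0),(0,0),(0,0),(1,2),(0,0),(0,0),((-1),(-2)),((-1),(-2)),(1,2),(0,0),(1,2),((-1),(-2)),(0,0),(0,0)],
  [(0,0),(0,0),(0,0),(0,0),(1,2),(0,0),((-1),(-2)),((-1),(-2)),((-1),(-2)),(1,2),(0,0),(1,2),(0,0),(0,0)],
  [(0,0),(0,0),(0,0),(0,0),(0,0),(1,2),((-1),(-2)),(1,2),((-1),(-2)),((-1),(-2)),(1,2),(0,0),(0,0),(0,0)],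
  [(3,6),(0,0),(0,0),(0,0),(0,0),(0,0),(0,0),(0,0),(0,0),(0,0),(0,0),(0,0),(0,0),(0,0)],
  [((-3),0),(3,0),(0,0),(0,0),(0,0),(0,0),(0,0),(0,0),(0,0),(0,0),(0,0),(0,0),(0,0),(0,0)],
  [((-3),0),(0,0),(3,0),(0,0),(0,0),(0,0),(0,0),(0,0),(0,0),(0,0),(0,0),(0,0),(0,0),(0,0)],
  [((-3),0),(0,0),(0,0),(3,0),(0,0),(0,0),(0,0),(0,0),(0,0),(0,0),(0,0),(0,0),(0,0),(0,0)],
  [((-3),0),(0,0),(0,0),(0,0),(3,0),(0,0),(0,0),(0,0),(0,0),(0,0),(0,0),(0,0),(0,0),(0,0)],
  [((-3),0),(0,0),(0,0),(0,0),(0,0),(3,0),(0,0),(0,0),(0,0),(0,0),(0,0),(0,0),(0,0),(0,0)],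
  [((-3),0),(0,0),(0,0),(0,0),(0,0),(0,0),(3,0),(0,0),(0,0),(0,0),(0,0),(0,0),(0,0),(0,0)],
  [((-3),0),(0,0),(0,0),(0,0),(0,0),(0,0),(0,0),(3,0),(0,0),(0,0),(0,0),(0,0),(0,0),(0,0)],
  [((-3),0),(0,0),(0,0),(0,0),(0,0),(0,0),(0,0),(0,0),(3,0),(0,0),(0,0),(0,0),(0,0),(0,0)],
  [((-3),0),(0,0),(0,0),(0,0),(0,0),(0,0),(0,0),(0,0),(0,0),(3,0),(0,0),(0,0),(0,0),(0,0)],
  [((-3),0),(0,0),(0,0),(0,0),(0,0),(0,0),(0,0),(0,0),(0,0),(0,0),(3,0),(0,0),(0,0),(0,0)],
  [((-3),0),(0,0),(0,0),(0,0),(0,0),(0,0),(0,0),(0,0),(0,0),(0,0),(0,0),(3,0),(0,0),(0,0)],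
  [(0,0),(0,0),(0,0),(0,0),(0,0),(0,0),(0,0),(0,0),(0,0),(0,0),(0,0),(0,0),(1,0),(0,0)],
  [(0,0),(0,0),(0,0),(0,0),(0,0),(0,0),(0,0),(0,0),(0,0),(0,0),(0,0),(0,0),(0,0),(1,0)]]"

definition GMnZ :: "(int \<times> int) list list" where
  "GMnZ = [
  [(1,0),(1,0),((-1),0),(0,0),(0,0),(0,0),(0,0),(0,0),(0,0),(0,0),(0,0),(0,0),(0,0),(0,0)],
  [(0,0),(1,0),(1,0),(1,0),(0,0),(0,0),(0,0),(0,0),(0,0),(0,0),(0,0),(0,0),(0,0),(0,0)],
  [(1,2),(0,0),(0,0),(0,0),(0,0),(0,0),(0,0),(0,0),(0,0),(0,0),(0,0),(0,0),(0,0),(0,0)],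
  [(0,0),(1,2),(0,0),(0,0),(0,0),(0,0),(0,0),(0,0),(0,0),(0,0),(0,0),(0,0),(0,0),(0,0)],
  [(0,0),(0,0),(1,2),(0,0),(0,0),(0,0),(0,0),(0,0),(0,0),(0,0),(0,0),(0,0),(0,0),(0,0)],
  [(0,0),(0,0),(0,0),(1,2),(0,0),(0,0),(0,0),(0,0),(0,0),(0,0),(0,0),(0,0),(0,0),(0,0)],
  [(0,0),(0,0),(0,0),(0,0),(1,0),(1,0),((-1),0),(0,0),(0,0),(0,0),(0,0),(0,0),(0,0),(0,0)],
  [(0,0),(0,0),(0,0),(0,0),(0,0),(1,0),(1,0),(1,0),(0,0),(0,0),(0,0),(0,0),(0,0),(0,0)],
  [(0,0),(0,0),(0,0),(0,0),(1,2),(0,0),(0,0),(0,0),(0,0),(0,0),(0,0),(0,0),(0,0),(0,0)],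
  [(0,0),(0,0),(0,0),(0,0),(0,0),(1,2),(0,0),(0,0),(0,0),(0,0),(0,0),(0,0),(0,0),(0,0)],
  [(0,0),(0,0),(0,0),(0,0),(0,0),(0,0),(1,2),(0,0),(0,0),(0,0),(0,0),(0,0),(0,0),(0,0)],
  [(0,0),(0,0),(0,0),(0,0),(0,0),(0,0),(0,0),(1,2),(0,0),(0,0),(0,0),(0,0),(0,0),(0,0)],
  [(0,0),(0,0),(0,0),(0,0),(0,0),(0,0),(0,0),(0,0),(1,0),(1,0),((-1),0),(0,0),(0,0),(0,0)],
  [(0,0),(0,0),(0,0),(0,0),(0,0),(0,0),(0,0),(0,0),(0,0),(1,0),(1,0),(1,0),(0,0),(0,0)],
  [(0,0),(0,0),(0,0),(0,0),(0,0),(0,0),(0,0),(0,0),(1,2),(0,0),(0,0),(0,0),(0,0),(0,0)],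
  [(0,0),(0,0),(0,0),(0,0),(0,0),(0,0),(0,0),(0,0),(0,0),(1,2),(0,0),(0,0),(0,0),(0,0)],
  [(0,0),(0,0),(0,0),(0,0),(0,0),(0,0),(0,0),(0,0),(0,0),(0,0),(1,2),(0,0),(0,0),(0,0)],
  [(0,0),(0,0),(0,0),(0,0),(0,0),(0,0),(0,0),(0,0),(0,0),(0,0),(0,0),(1,2),(0,0),(0,0)],
  [(0,0),(0,0),(0,0),(0,0),(0,0),(0,0),(0,0),(0,0),(0,0),(0,0),(0,0),(0,0),(1,0),(0,0)],
  [(0,0),(0,0),(0,0),(0,0),(0,0),(0,0),(0,0),(0,0),(0,0),(0,0),(0,0),(0,0),(0,0),(1,0)]]"

definition XZ :: "(int \<times> int) list list" where
  "XZ = [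
  [(60,50),((-80),(-74)),(0,0),(0,0),(37,(-70)),(24,(-1)),(105,5),((-169),(-53)),(0,0),(0,0),((-87),(-202)),(15,(-78)),((-49),(-125)),(104,234),(0,0),(0,0),((-201),(-20)),((-129),22),((-186),(-111)),(12,(-87))],
  [((-8),20),(15,(-25)),(0,0),(0,0),(47,35),(8,13),(28,53),((-21),(-75)),(0,0),(0,0),(79,1),(45,26),(50,3),((-90),0),(0,0),(0,0),((-47),(-98)),((-48),(-71)),(3,(-71)),(48,26)],
  [(11,11),((-13),(-15)),(0,0),(0,0),(10,(-10)),(5,1),(21,4),((-33),(-14)),(0,0),(0,0),((-12),(-38)),(5,(-14)),((-7),(-24)),(15,44),(0,0),(0,0),((-41),(-9)),((-27),0),((-34),(-24)),(5,(-15))],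
  [((-4),4),(6,(-4)),(0,0),(0,0),(11,11),(1,3),(3,13),(1,(-16)),(0,0),(0,0),(22,7),(10,9),(14,5),((-26),(-8)),(0,0),(0,0),((-5),(-24)),((-8),(-18)),(6,(-14)),(12,10)],
  [(13,6),((-17),(-9)),(0,0),(0,0),((-1),(-19)),(3,(-2)),(15,(-7)),((-28),2),(0,0),(0,0),((-28),(-37)),((-4),(-19)),((-17),(-22)),(34,42),(0,0),(0,0),((-28),13),((-15),16),((-35),(-9)),((-6),(-20))],
  [((-3),5),(5,(-5)),(0,0),(0,0),(12,10),(1,3),(6,14),((-3),(-19)),(0,0),(0,0),(22,3),(11,8),(15,4),((-28),(-6)),(0,0),(0,0),((-8),(-27)),((-10),(-21)),(5,(-17)),(13,9)],
  [(9,8),((-11),(-11)),(0,0),(0,0),(6,(-10)),(3,0),(18,3),((-28),(-12)),(0,0),(0,0),((-11),(-32)),(4,(-12)),((-7),(-20)),(15,38),(0,0),(0,0),((-33),(-5)),((-22),2),((-30),(-20)),(3,(-13))],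
  [((-42),48),(67,(-57)),(0,0),(0,0),(136,127),(17,39),(60,163),((-25),(-219)),(0,0),(0,0),(265,52),(134,98),(169,41),((-308),(-56)),(0,0),(0,0),((-99),(-304)),((-119),(-228)),(57,(-192)),(147,102)],
  [((-50),(-49)),(65,70),(0,0),(0,0),((-45),51),((-22),(-2)),((-97),(-18)),(150,65),(0,0),(0,0),(54,172),((-25),60),(28,107),((-66),(-202)),(0,0),(0,0),(186,44),(124,0),(159,114),((-23),68)],
  [((-46),(-41)),(61,60),(0,0),(0,0),((-34),51),((-19),0),((-84),(-9)),(133,48),(0,0),(0,0),(60,156),((-16),58),(34,98),((-74),(-184)),(0,0),(0,0),(162,24),(106,(-10)),(145,93),((-14),65)],
  [((-45),(-52)),(58,74),(0,0),(0,0),((-56),39),((-23),(-6)),((-101),(-31)),(150,82),(0,0),(0,0),(32,166),((-36),51),(15,103),((-40),(-196)),(0,0),(0,0),(193,68),(133,19),(153,129),((-35),59)],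
  [((-41),(-44)),(54,63),(0,0),(0,0),((-44),39),((-20),(-3)),((-87),(-22)),(131,64),(0,0),(0,0),(37,147),((-26),49),(19,91),((-46),(-172)),(0,0),(0,0),(164,48),(111,8),(135,105),((-25),55)],
  [((-46),(-52)),(59,74),(0,0),(0,0),((-55),41),((-24),(-5)),((-100),(-29)),(149,79),(0,0),(0,0),(35,166),((-34),52),(17,103),((-44),(-196)),(0,0),(0,0),(191,64),(131,16),(153,126),((-33),60)],
  [((-54),(-44)),(71,65),(0,0),(0,0),((-32),63),((-21),1),((-92),(-2)),(148,43),(0,0),(0,0),(81,178),((-11),70),(45,111),((-96),(-208)),(0,0),(0,0),(177,14),(113,(-22)),(165,95),((-9),78)],
  [((-43),(-44)),(56,63),(0,0),(0,0),((-42),43),((-20),(-3)),((-88),(-19)),(134,61),(0,0),(0,0),(44,153),((-24),52),(22,95),((-53),(-180)),(0,0),(0,0),(169,45),(114,5),(141,106),((-23),59)],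
  [((-46),(-51)),(59,72),(0,0),(0,0),((-52),42),((-23),(-5)),((-99),(-27)),(149,76),(0,0),(0,0),(38,166),((-32),53),(19,103),((-48),(-196)),(0,0),(0,0),(189,60),(129,13),(153,123),((-31),61)],
  [((-46),(-40)),(61,59),(0,0),(0,0),((-32),52),((-19),0),((-82),(-5)),(131,42),(0,0),(0,0),(66,156),((-12),60),(37,97),((-80),(-182)),(0,0),(0,0),(157,17),(101,(-16)),(144,88),((-10),67)],
  [((-50),(-49)),(65,70),(0,0),(0,0),((-45),51),((-22),(-2)),((-97),(-19)),(149,65),(0,0),(0,0),(53,171),((-25),59),(29,107),((-66),(-202)),(0,0),(0,0),(186,43),(124,0),(158,114),((-23),68)],
  [((-43),(-44)),(56,63),(0,0),(0,0),((-42),43),((-20),(-3)),((-88),(-19)),(134,61),(0,0),(0,0),(44,153),((-24),52),(23,95),((-55),(-180)),(0,0),(0,0),(168,43),(112,3),(141,104),((-23),59)],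
  [((-35),(-15)),(48,24),(0,0),(0,0),(6,54),((-8),7),((-38),26),(74,(-13)),(0,0),(0,0),(86,102),(16,53),(52,65),((-102),(-118)),(0,0),(0,0),(76,(-44)),(39,(-50)),(96,18),(20,58)],
  [((-18),15),(28,(-17)),(0,0),(0,0),(47,49),(5,14),(16,58),(0,(-75)),(0,0),(0,0),(99,29),(47,39),(63,21),((-116),(-32)),(0,0),(0,0),((-25),(-108)),((-36),(-83)),(30,(-63)),(52,41)]]"

definition YZ :: "(int \<times> int) list list" where
  "YZ = [
  [(4314,(-2912)),(6750,9609),(3388,1817),(10138,11314),(6777,3523),(10156,7257),(3379,3846),(3396,15),((-1356),(-682)),(2725,(-2017)),((-1348),(-2373)),(15,(-3381)),(0,0),((-8664),14277),(6777,3411),(0,0),(6814,(-5042)),(0,0),(0,0),((-1),(-2)),(2,1)],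
  [((-25449),(-8201)),((-706),(-30881)),((-8653),(-11669)),((-9670),(-42408)),((-17618),(-23199)),((-20944),(-37288)),((-3016),(-14230)),((-13662),(-9395)),(3588,4612),((-16565),(-4955)),((-1112),6744),((-9395),4267),(0,0),(74380,5731),((-17929),(-23057)),(0,0),((-41418),(-12391)),(0,0),(0,0),(0,10),((-9),(-11))],
  [((-1312),81661),((-126538),(-85051)),((-37095),2470),((-162650),(-80892)),((-73214),6626),((-127106),(-19780)),((-54870),(-28087)),((-21306),29621),(14446,(-1668)),(727,54248),(29257,23801),(29621,50927),(0,0),((-71435),(-290628)),((-72233),8315),(0,0),(1811,135629),(0,0),(0,0),(33,15),((-20),15)],
  [((-11898),(-36130)),(49442,18399),(10374,(-6664)),(59277,11139),(20212,(-13923)),(39793,(-10407)),(20117,4109),(1718,(-16237)),((-3934),2906),((-8367),(-23761)),((-12053),(-6074)),((-16237),(-17955)),(0,0),(64389,117142),(19673,(-14519)),(0,0),((-20917),(-59408)),(0,0),(0,0),((-12),(-2)),(4,(-9))],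
  [((-23348),33991),((-64628),(-70543)),((-26475),(-9153)),((-90883),(-78715)),((-52733),(-17328)),((-82955),(-43242)),((-30440),(-26890)),((-22954),6607),(10504,3268),((-14399),23020),(13806,18050),(6607,29561),(0,0),(30172,(-141881)),((-52515),(-16347)),(0,0),((-36004),57551),(0,0),(0,0),(18,13),((-16),3)],
  [(26199,(-40558)),(76242,81613),(30786,10180),(106752,90644),(61301,19214),(96794,49049),(35767,30979),(26364,(-8299)),((-12206),(-3610)),(16111,(-27434)),((-16353),(-20944)),((-8299),(-34663)),(0,0),((-31643),167768),(61027,18065),(0,0),(40285,(-68588)),(0,0),(0,0),((-26),(-21)),(25,(-1))],
  [((-5692),7589),((-14680),(-16488)),((-6143),(-2257)),((-20778),(-18520)),((-12241),(-4290)),((-19152),(-10389)),((-6956),(-6323)),((-5421),1355),(2440,813),((-3523),5149),(3117,4201),(1355,6776),(0,0),(7993,(-32117)),((-12197),(-4066)),(0,0),((-8810),12872),(0,0),(0,0),(4,3),((-4),0)],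
  [((-18570),(-1539)),((-7366),(-27054)),((-8299),(-8349)),((-15838),(-35208)),((-16772),(-16505)),((-22108),(-28176)),((-5164),(-11865)),((-11085),(-5225)),(3390,3262),((-12002),(-664)),(776,6192),((-5225),5860),(0,0),(50199,(-11574)),((-16945),(-16310)),(0,0),((-30009),(-1662)),(0,0),(0,0),(3,7),((-8),(-6))],
  [((-127209),25055),((-105317),(-221520)),((-72744),(-55860)),((-178814),(-275319)),((-146248),(-109669)),((-206102),(-200761)),((-59103),(-93143)),((-84872),(-22739)),(29407,21520),((-81535),19086),(18030,52588),((-22739),62133),(0,0),(311237,(-205448)),((-147005),(-107611)),(0,0),((-203861),47708),(0,0),(0,0),(42,58),((-64),(-26))],
  [(6444,(-76269)),(120919,87478),(37171,23),(157215,85860),(73474,(-1591)),(125590,26487),(52986,29711),(23123,(-26355)),((-14520),651),(2686,(-50766)),((-27697),(-24093)),((-26355),(-49478)),(0,0),(53006,276222),(72601,(-3232)),(0,0),(6722,(-126923)),(0,0),(0,0),((-33),(-17)),(23,(-13))],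
  [((-99895),(-32241)),((-2694),(-121170)),((-33944),(-45808)),((-37861),(-166423)),((-69113),(-91068)),((-82138),(-146359)),((-11807),(-55843)),((-53618),(-36897)),(14073,18104),((-65028),(-19485)),((-4382),26462),((-36897),16721),(0,0),(292016,22671),((-70339),(-90515)),(0,0),((-162585),(-48723)),(0,0),(0,0),(11,36),((-37),(-31))],
  [(77959,72909),((-71483),46014),(5172,37536),((-64776),84095),(11877,75620),((-9208),103832),((-22613),27669),(29860,46307),((-2687),(-15237)),(51668,46911),(20471,(-7009)),(46307,16447),(0,0),((-271675),(-186921)),(13413,76167),(0,0),(129178,117290),(0,0),(0,0),(11,(-20)),(18,34)],
  [(12361,6633),((-3740),12306),(3020,5767),((-537),18058),(6223,11520),(6105,17535),((-301),6029),(5971,5535),((-1283),(-2302)),(8097,4166),(1486,(-2519)),(5535,(-436)),(0,0),((-38557),(-12174)),(6407,11506),(0,0),(20245,10417),(0,0),(0,0),(1,(-3)),(3,5)],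
  [(2838,(-40929)),(64565,45989),(19648,(-264)),(83738,44852),(38824,(-1400)),(66580,13262),(28228,15531),(12026,(-14299)),((-7670),457),(1042,(-27231)),((-14819),(-12708)),((-14299),(-26325)),(0,0),(30074,147664),(38351,(-2273)),(0,0),(2608,(-68082)),(0,0),(0,0),((-18),(-9)),(11,(-8))],
  [((-119804),(-170434)),(199839,(-11343)),(18123,(-59868)),(214892,(-73244)),(33184,(-121773)),(103800,(-146860)),(73672,(-23062)),((-31232),(-92578)),((-6016),24770),((-80524),(-110861)),((-52312),(-5913)),((-92578),(-61346)),(0,0),(471039,494201),(30114,(-123810)),(0,0),((-201320),(-277179)),(0,0),(0,0),((-42),21),((-13),(-65))],
  [(91625,153659),((-188763),(-15028)),((-24269),46659),((-210400),33663),((-45914),95352),((-115178),107245),((-71883),9869),(18035,79353),(8651,(-19486)),(62033,100265),(48333,11183),(79353,61318),(0,0),((-381623),(-460585)),((-43283),97388),(0,0),(155088,250685),(0,0),(0,0),(42,(-11)),(3,53)],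
  [((-27274),(-34864)),(39428,(-6585)),(2368,(-13482)),(41145,(-20449)),(4087,(-27347)),(17587,(-34290)),(14148,(-6562)),((-8098),(-19632)),((-686),5548),((-18256),(-22624)),((-10503),(-221)),((-19632),(-11534)),(0,0),(103625,98556),(3436,(-27730)),(0,0),((-45643),(-56567)),(0,0),(0,0),((-7),5),((-3),(-13))],
  [(20345,(-72190)),(121922,104754),(42077,6383),(163289,109410),(83451,11043),(137647,46943),(54901,37618),(30687,(-21370)),((-16549),(-1859)),(11727,(-48326)),((-27233),(-27892)),((-21370),(-52057)),(0,0),(12744,274513),(82744,9317),(0,0),(29327,(-120820)),(0,0),(0,0),((-35),(-21)),(27,(-10))],
  [(143962,110381),((-94622),109633),(20380,68407),((-71702),178549),(43298,137331),(20237,197016),((-25590),59177),(61228,76616),((-9176),(-27574)),(94944,70521),(29141,(-19873)),(76616,15388),(0,0),((-479441),(-259207)),(45840,137844),(0,0),(237377,176324),(0,0),(0,0),(11,(-41)),(38,58)],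
  [(75127,(-179473)),(315985,298261),(116487,26828),(430912,320498),(231431,49077),(374554,154393),(144673,109885),(91455,(-46968)),((-45978),(-8887)),(44982,(-120616)),((-69457),(-78109)),((-46968),(-138423)),(0,0),((-32807),704983),(229878,44487),(0,0),(112481,(-301554)),(0,0),(0,0),((-93),(-63)),(78,(-18))]]"

definition FZ :: "(int \<times> int) list list" where
  "FZ = [
  [(138,132),((-43),(-59)),(89,58),((-130),(-74)),(266,43),((-147),(-126)),(116,(-56)),((-11),125),((-87),(-297)),(109,263),((-14),(-55)),((-161),(-124)),((-441),(-306)),(57,(-192))],
  [((-12),(-15)),(2,4),((-7),(-8)),(11,10),((-25),(-11)),(12,15),((-13),1),(4,(-10)),((-3),24),((-5),(-22)),((-2),2),(13,14),(36,36),((-12),12)],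
  [(0,9),(2,(-2)),(2,4),((-4),(-8)),(14,16),(0,(-9)),(11,7),((-8),(-1)),(15,(-3)),((-11),5),(4,(-1)),((-5),(-10)),((-6),(-27)),(15,3)],
  [(3,(-24)),((-4),7),((-4),(-17)),(11,28),((-37),(-50)),(0,27),((-31),(-23)),(25,2),((-42),12),(34,(-16)),((-8),2),(4,29),(18,81),((-48),(-15))],
  [(15,0),((-4),(-2)),(8,(-2)),((-10),4),(5,(-23)),((-15),0),((-1),(-17)),(10,14),((-30),(-24)),(28,20),((-5),(-4)),((-14),2),((-36),9),((-18),(-27))],
  [(0,(-24)),((-4),7),((-7),(-17)),(5,19),((-34),(-44)),(0,24),((-28),(-20)),(22,2),((-36),12),(28,(-16)),((-8),2),(4,26),(18,72),((-42),(-12))],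
  [((-24),0),(8,4),((-10),4),(14,(-8)),((-10),37),(21,(-3)),(11,31),((-20),(-22)),(48,36),((-44),(-28)),(10,8),(22,(-4)),(54,(-21)),(30,42)],
  [(9,0),((-4),(-2)),(2,(-2)),((-4),4),(2,(-14)),((-9),0),((-4),(-11)),(7,8),((-21),(-12)),(16,8),((-2),(-1)),((-8),5),((-18),12),((-12),(-15))],
  [(0,(-21)),((-4),4),((-4),(-11)),(8,19),((-31),(-38)),(3,21),((-22),(-17)),(22,2),((-30),12),(22,(-16)),((-8),2),(4,23),(18,63),((-36),(-9))],
  [(0,12),(2,(-2)),(2,7),((-4),(-11)),(20,28),(0,(-15)),(17,13),((-14),(-1)),(24,(-6)),((-20),8),(4,(-1)),((-2),(-16)),((-9),(-42)),(27,9)],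
  [((-12),(-15)),(2,4),((-7),(-8)),(11,10),((-25),(-14)),(9,12),((-13),1),(7,(-7)),(0,24),((-2),(-22)),(1,5),(13,14),(33,36),((-12),12)],
  [(9,0),((-4),(-2)),(2,(-2)),((-4),4),(2,(-14)),((-9),0),((-4),(-11)),(7,8),((-18),(-12)),(13,8),((-2),(-1)),((-8),(-1)),((-18),6),((-12),(-15))],
  [((-315),(-135)),(117,81),((-171),(-27)),(234,9),((-342),234),(324,117),((-54),279),((-144),(-306)),(468,585),((-450),(-477)),(90,117),(333,90),(864,162),(180,522)],
  [((-162),135),(90,(-18)),((-45),117),(45,(-189)),(144,522),(144,(-153)),(225,324),((-279),(-180)),(567,189),((-477),(-99)),(108,45),(126,(-189)),(270,(-567)),(468,369)]]"

definition GZ :: "(int \<times> int) list list" where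
  "GZ = [
  [(6,(-132)),(3,15),((-9),(-9)),(27,24),(15,0),(24,24),((-24),0),(9,0),(21,21),((-12),(-12)),(3,15),(9,0),((-3),(-51)),(50,55)],
  [(16,59),((-2),(-4)),(4,2),((-11),(-7)),((-2),2),((-11),(-7)),(4,(-4)),((-2),2),((-8),(-4)),(4,2),((-2),(-4)),((-2),2),(8,22),((-22),(-17))],
  [(31,(-58)),(1,8),((-2),(-4)),(13,17),(10,2),(10,17),((-14),(-4)),(4,2),(7,11),((-5),(-7)),(1,8),(4,2),(8,(-23)),(22,35)],
  [((-56),74),(1,(-10)),(4,8),((-17),(-28)),((-14),(-4)),((-14),(-19)),(22,8),((-8),(-4)),((-11),(-19)),(7,11),(1,(-10)),((-8),(-4)),((-16),31),((-27),(-51))],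
  [(223,(-43)),((-14),11),((-2),(-16)),(13,50),(28,23),(10,44),((-47),(-37)),(16,14),(7,38),((-8),(-28)),((-11),14),(16,14),(74,(-26)),(12,102)],
  [((-21),126),((-3),(-15)),(9,9),((-27),(-27)),((-15),0),((-24),(-24)),(24,3),((-9),0),((-18),(-21)),(15,15),((-3),(-12)),((-9),0),((-1),49),((-49),(-59))],
  [(172,56),((-14),(-1)),(4,(-7)),((-8),23),(16,17),((-8),20),((-20),(-31)),(7,11),((-5),17),(4,(-13)),((-14),(-1)),(7,11),(61,14),((-25),43)],
  [((-136),(-125)),(14,10),((-7),1),(23,(-2)),((-4),(-14)),(20,(-2)),(2,22),((-1),(-8)),(20,(-2)),((-13),1),(14,7),((-1),(-8)),((-51),(-42)),(50,(-2))],
  [(210,297),((-27),(-24)),(18,3),((-54),(-12)),((-6),24),((-48),(-12)),(12,(-36)),((-9),12),((-42),(-12)),(30,6),((-24),(-24)),((-6),12),(84,105),((-117),(-39))],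
  [((-154),(-263)),(17,22),((-16),(-5)),(50,16),(8,(-20)),(44,16),((-16),28),(8,(-8)),(38,16),((-28),(-8)),(20,22),(5,(-8)),((-64),(-95)),(103,47)],
  [(41,55),((-4),(-2)),(5,1),((-10),(-2)),((-1),4),((-10),(-2)),(2,(-8)),((-1),1),((-10),(-2)),(5,1),((-4),(-5)),((-1),1),(17,19),((-23),(-7))],
  [((-37),124),((-1),(-14)),(5,10),((-25),(-29)),((-16),(-2)),((-22),(-26)),(26,4),((-13),(-5)),((-19),(-23)),(14,16),((-1),(-14)),((-7),1),((-7),49),((-47),(-64))],
  [(135,(-306)),(0,36),((-18),(-27)),(63,81),(45,9),(54,72),((-72),(-18)),(27,9),(45,63),((-36),(-45)),(0,36),(27,9),(33,(-123)),(114,174)],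
  [((-747),(-576)),(72,36),((-33),15),(99,(-45)),((-27),(-81)),(90,(-36)),(33,129),((-6),(-48)),(81,(-27)),((-51),24),(69,30),((-12),(-42)),((-279),(-189)),(234,(-54))]]"

lemma check_F: "list_all2 (\<lambda>g x. lcZ g FZ = map (psc 9) (lcZ x GMnZ)) GLnZ XZ"
  by code_simp
lemma check_G: "list_all2 (\<lambda>g y. lcZ g GZ = map (psc 3) (lcZ y GLnZ)) GMnZ YZ"
  by code_simp
lemma check_inv1: "list_all (\<lambda>i. lcZ (FZ!i) GZ = map (\<lambda>j. if j = i then (27,0) else (0,0)) [0..<14]) [0..<14]"
  by code_simp
lemma check_inv2: "list_all (\<lambda>i. lcZ (GZ!i) FZ = map (\<lambda>j. if j = i then (27,0) else (0,0)) [0..<14]) [0..<14]"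
  by code_simp
lemma check_form: "list_all (\<lambda>i. list_all (\<lambda>l. formZM (FZ!i) (FZ!l) = GLexp i l) [0..<14]) [0..<14]"
  by code_simp

lemma ep_pair[simp]: "ep (a,b) = emb a b" by (simp add: ep_def)
lemma ep_padd: "ep (padd p q) = ep p + ep q"
  by (cases p; cases q) (simp add: emb_add)
lemma ep_pmul: "ep (pmul p q) = ep p * ep q"
  by (cases p; cases q) (simp add: emb_mult)
lemma ep_pcnj: "ep (pcnj p) = cnj (ep p)"
  by (cases p) (simp add: cnj_emb)
lemma ep_psc: "ep (psc c p) = of_int c * ep p"
  by (cases p) (simp add: emb_of_int emb_mult)
lemma ep_psum: "ep (psum xs) = sum_list (map ep xs)"
  by (induction xs) (simp_all add: psum_def ep_padd emb_def)

lemma sum_list_map_upt: "sum_list (map f [0..<n]) = (\<Sum>k<n. f k)"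
  by (simp add: sum_set_upt_conv_sum_list_nat[symmetric] atLeast0LessThan)

lemma length_lc[simp]: "length (lc x G) = 14" by (simp add: lc_def)
lemma nth_lc: "j < 14 \<Longrightarrow> lc x G ! j = (\<Sum>k<length G. x!k * G!k!j)" by (simp add: lc_def)
lemma length_lcZ[simp]: "length (lcZ x G) = 14" by (simp add: lcZ_def)

lemma lc_evec:
  assumes "length x = length G" "\<forall>g\<in>set G. length g = 14"
  shows "lc (evec x) (map evec G) = evec (lcZ x G)"
proof (rule nth_equalityI)
  fix j assume "j < length (lc (evec x) (map evec G))"
  hence j: "j < 14" by simp
  have "lc (evec x) (map evec G) ! j = (\<Sum>k<length G. ep (x!k) * ep (G!k!j))"
    using assms j by (simp add: nth_lc evec_def)
  also have "\<dots> = ep (lcZ x G ! j)"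
    using j by (simp add: lcZ_def ep_psum ep_pmul o_def sum_list_map_upt)
  finally show "lc (evec x) (map evec G) ! j = evec (lcZ x G) ! j" using j by (simp add: evec_def)
qed (simp add: evec_def)

lemma sum14: "(\<Sum>i<(14::nat). f i) = f 0 + f 1 + f 2 + f 3 + f 4 + f 5 + f 6 + f 7 + f 8 + f 9 + f 10 + f 11 + f 12 + (f 13 :: 'a::comm_monoid_add)"
  by (simp add: eval_nat_numeral ac_simps)
lemma sum12: "(\<Sum>i<(12::nat). f i) = f 0 + f 1 + f 2 + f 3 + f 4 + f 5 + f 6 + f 7 + f 8 + f 9 + f 10 + (f 11 :: 'a::comm_monoid_add)"
  by (simp add: eval_nat_numeral ac_simps)
lemma sum4: "(\<Sum>i<(4::nat). f i) = f 0 + f 1 + f 2 + (f 3 :: 'a::comm_monoid_add)"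
  by (simp add: eval_nat_numeral ac_simps)

definition hM :: "complex list \<Rightarrow> complex list \<Rightarrow> complex" where
  "hM x y = (\<Sum>j<12. - (cnj (x!j) * y!j)) + cnj (x!12) * cnj theta * y!13 + cnj (x!13) * theta * y!12"

lemma E8cubeH_form_hM:
  assumes "length x = 14" "length y = 14"
  shows "E8cubeH_form x y = hM x y"
  using assms
  by (simp add: E8cubeH_form_def E8_form_def std_herm_def H_form_def hM_def sum12 sum4 algebra_simps)

definition hL :: "complex list \<Rightarrow> complex list \<Rightarrow> complex" where
  "hL x y = (\<Sum>j<12. - (1/3) * (cnj (x!j) * y!j)) + cnj (x!12) * cnj theta * y!13 + cnj (x!13) * theta * y!12"

lemma Lbig_form_hL:
  assumes "length x = 14" "length y = 14"
  shows "Lbig_form x y = hL x y"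
  using assms
  by (simp add: Lbig_form_def Leech_form_def std_herm_def H_form_def hL_def sum12 algebra_simps)

lemma cnj_theta_emb: "cnj theta = emb (-1) (-2)" by (simp add: emb_theta cnj_emb)

lemma hM_evec:
  assumes "length x = 14" "length y = 14"
  shows "hM (evec x) (evec y) = ep (formZM x y)"
  using assms
  by (simp add: hM_def formZM_def ep_padd ep_psum ep_pmul ep_pcnj ep_psc sum_list_map_upt o_def
      evec_def cnj_theta_emb emb_theta cnj_emb)

lemma bil:
  assumes "a < 14" "b < 14"
  shows "cnj (lc u F ! a) * (lc v F ! b) = (\<Sum>i<length F. \<Sum>l<length F. cnj (u!i) * v!l * (cnj (F!i!a) * F!l!b))"
  using assms apply (simp add: nth_lc sum_product mult_ac)
  apply (subst sum.swap) apply (simp add: mult_ac) done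

lemma hM_alt: "hM x y = (\<Sum>j<12. - (cnj (x!j) * y!j)) + cnj theta * (cnj (x!12) * y!13) + theta * (cnj (x!13) * y!12)"
  by (simp add: hM_def mult_ac)

lemma hM_lc:
  "hM (lc u F) (lc v F) = (\<Sum>i<length F. \<Sum>l<length F. cnj (u!i) * v!l * hM (F!i) (F!l))"
proof -
  have "hM (lc u F) (lc v F) =
     (\<Sum>j<12. - (\<Sum>i<length F. \<Sum>l<length F. cnj (u!i) * v!l * (cnj (F!i!j) * F!l!j)))
     + cnj theta * (\<Sum>i<length F. \<Sum>l<length F. cnj (u!i) * v!l * (cnj (F!i!12) * F!l!13))
     + theta * (\<Sum>i<length F. \<Sum>l<length F. cnj (u!i) * v!l * (cnj (F!i!13) * F!l!12))"
    unfolding hM_alt by (simp add: bil)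
  also have "\<dots> = (\<Sum>i<length F. \<Sum>l<length F. cnj (u!i) * v!l * hM (F!i) (F!l))"
    unfolding hM_alt
    by (simp add: sum_distrib_left sum.distrib algebra_simps sum_negf[symmetric] sum.swap[of _ "{..<12::nat}"])
  finally show ?thesis .
qed

definition Fc :: "complex list list" where "Fc = map evec FZ"
definition Gc :: "complex list list" where "Gc = map evec GZ"
definition fmap :: "complex list \<Rightarrow> complex list" where "fmap v = map (\<lambda>z. z / 9) (lc v Fc)"
definition gmap :: "complex list \<Rightarrow> complex list" where "gmap v = map (\<lambda>z. z / 3) (lc v Gc)"

lemma length_FZ: "length FZ = 14" by (simp add: FZ_def)
lemma length_GZ: "length GZ = 14" by (simp add: GZ_def)
lemma rows_FZ: "\<forall>r\<in>set FZ. length r = 14" by (simp add: FZ_def)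
lemma rows_GZ: "\<forall>r\<in>set GZ. length r = 14" by (simp add: GZ_def)
lemma length_Fc[simp]: "length Fc = 14" by (simp add: Fc_def length_FZ)
lemma length_Gc[simp]: "length Gc = 14" by (simp add: Gc_def length_GZ)
lemma length_fmap[simp]: "length (fmap v) = 14" by (simp add: fmap_def)
lemma length_gmap[simp]: "length (gmap v) = 14" by (simp add: gmap_def)

lemma form_FZ: "i < 14 \<Longrightarrow> l < 14 \<Longrightarrow> formZM (FZ!i) (FZ!l) = GLexp i l"
  using check_form by (simp add: list_all_iff)

lemma hM_div9:
  assumes "length x = 14" "length y = 14"
  shows "hM (map (\<lambda>z. z / 9) x) (map (\<lambda>z. z / 9) y) = hM x y / 81"
  using assms by (simp add: hM_def sum12 field_simps)

lemma GLexp_val: "ep (GLexp i l) / 81 = (if i = l \<and> i < 12 then -1/3 else if i = 12 \<and> l = 13 then cnj theta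
   else if i = 13 \<and> l = 12 then theta else 0)"
  by (simp add: GLexp_def emb_def theta_eq cnj_omega)

lemma fmap_form:
  assumes "length u = 14" "length v = 14"
  shows "E8cubeH_form (fmap u) (fmap v) = Lbig_form u v"
proof -
  have "E8cubeH_form (fmap u) (fmap v) = hM (lc u Fc) (lc v Fc) / 81"
    by (simp add: E8cubeH_form_hM fmap_def hM_div9)
  also have "\<dots> = (\<Sum>i<14. \<Sum>l<14. cnj (u!i) * v!l * (ep (GLexp i l) / 81))"
    unfolding hM_lc
    by (simp add: sum_divide_distrib Fc_def length_FZ hM_evec rows_FZ form_FZ)
  also have "\<dots> = hL u v"
    unfolding GLexp_val by (simp add: sum14 hL_def sum12)
  finally show ?thesis using assms by (simp add: Lbig_form_hL)
qed

lemma lc_lc: "length H = 14 \<Longrightarrow> lc (lc x G) H = lc x (map (\<lambda>g. lc g H) G)"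
proof (rule nth_equalityI)
  fix j assume H: "length H = 14" and "j < length (lc (lc x G) H)"
  hence j: "j < 14" by simp
  have "lc (lc x G) H ! j = (\<Sum>m<14. (\<Sum>k<length G. x!k * G!k!m) * H!m!j)"
    using H j by (simp add: nth_lc)
  also have "\<dots> = (\<Sum>k<length G. x!k * (\<Sum>m<14. G!k!m * H!m!j))"
    by (simp add: sum_distrib_right sum_distrib_left mult_ac sum.swap[of _ "{..<14::nat}"])
  also have "\<dots> = lc x (map (\<lambda>g. lc g H) G) ! j"
    using H j by (simp add: nth_lc)
  finally show "lc (lc x G) H ! j = lc x (map (\<lambda>g. lc g H) G) ! j" .
qed simp

lemma lc_div: "length G \<le> length w \<Longrightarrow> lc (map (\<lambda>z. z / c) w) G = map (\<lambda>z. z / c) (lc w G)"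
  by (rule nth_equalityI) (auto simp: nth_lc sum_divide_distrib)

lemma evec_psc: "evec (map (psc c) w) = map (\<lambda>z. of_int c * z) (evec w)"
  by (simp add: evec_def ep_psc)

definition E27 :: "(int \<times> int) list list" where
  "E27 = map (\<lambda>i. map (\<lambda>j. if j = i then (27,0) else (0,0)) [0..<14]) [0..<14]"

lemma FG_E27: "map (\<lambda>r. lcZ r GZ) FZ = E27"
  using check_inv1 by (intro nth_equalityI) (auto simp: list_all_iff length_FZ E27_def)
lemma GF_E27: "map (\<lambda>r. lcZ r FZ) GZ = E27"
  using check_inv2 by (intro nth_equalityI) (auto simp: list_all_iff length_GZ E27_def)

lemma lc_E27: "length v = 14 \<Longrightarrow> lc v (map evec E27) = map (\<lambda>z. 27 * z) v"
proof (rule nth_equalityI)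
  fix j assume v: "length v = 14" and "j < length (lc v (map evec E27))"
  hence j: "j < 14" by simp
  have "lc v (map evec E27) ! j = (\<Sum>k<14. v!k * ep (if j = k then (27,0) else (0,0)))"
    using j by (simp add: nth_lc evec_def E27_def)
  also have "\<dots> = (\<Sum>k<14. if k = j then 27 * v!k else 0)"
    by (rule sum.cong) (auto simp: emb_def)
  also have "\<dots> = 27 * v!j" using j by simp
  finally show "lc v (map evec E27) ! j = map (\<lambda>z. 27 * z) v ! j" using v j by simp
qed (simp add: E27_def)

lemma lc_Fc_Gc: "map (\<lambda>g. lc g Gc) Fc = map evec E27"
proof -
  have "map (\<lambda>g. lc g Gc) Fc = map (\<lambda>r. evec (lcZ r GZ)) FZ"
    using rows_FZ by (auto simp: Fc_def Gc_def lc_evec length_GZ rows_GZ)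
  also have "\<dots> = map evec E27" unfolding FG_E27[symmetric] by simp
  finally show ?thesis .
qed
lemma lc_Gc_Fc: "map (\<lambda>g. lc g Fc) Gc = map evec E27"
proof -
  have "map (\<lambda>g. lc g Fc) Gc = map (\<lambda>r. evec (lcZ r FZ)) GZ"
    using rows_GZ by (auto simp: Fc_def Gc_def lc_evec length_FZ rows_FZ)
  also have "\<dots> = map evec E27" unfolding GF_E27[symmetric] by simp
  finally show ?thesis .
qed

lemma gmap_fmap: "length v = 14 \<Longrightarrow> gmap (fmap v) = v"
  unfolding gmap_def fmap_def
  by (simp add: lc_div lc_lc lc_Fc_Gc lc_E27 o_def)

lemma fmap_gmap: "length v = 14 \<Longrightarrow> fmap (gmap v) = v"
  unfolding gmap_def fmap_def
  by (simp add: lc_div lc_lc lc_Gc_Fc lc_E27 o_def)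

lemma fmap_lc: "fmap (lc x G) = lc x (map fmap G)"
  unfolding fmap_def
  by (rule nth_equalityI) (auto simp: lc_lc nth_lc sum_divide_distrib[symmetric] intro!: sum.cong)

lemma gmap_lc: "gmap (lc x G) = lc x (map gmap G)"
  unfolding gmap_def
  by (rule nth_equalityI) (auto simp: lc_lc nth_lc sum_divide_distrib[symmetric] intro!: sum.cong)

lemma nth_vadd: "k < length u \<Longrightarrow> k < length v \<Longrightarrow> vadd u v ! k = u!k + v!k"
  by (simp add: vadd_def)
lemma length_vadd[simp]: "length (vadd u v) = min (length u) (length v)"
  by (simp add: vadd_def)
lemma nth_vscale: "k < length u \<Longrightarrow> vscale a u ! k = a * u!k"
  by (simp add: vscale_def)
lemma length_vscale[simp]: "length (vscale a u) = length u"
  by (simp add: vscale_def)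

lemma fmap_linear:
  assumes "length u = 14" "length v = 14"
  shows "fmap (vadd (vscale a u) (vscale b v)) = vadd (vscale a (fmap u)) (vscale b (fmap v))"
  using assms unfolding fmap_def
  by (intro nth_equalityI) (auto simp: nth_lc nth_vadd nth_vscale sum.distrib sum_distrib_left
      add_divide_distrib algebra_simps)

definition GLn :: "complex list list" where "GLn = map evec GLnZ"
definition GMn :: "complex list list" where "GMn = map evec GMnZ"

lemma GLnZ_facts: "length GLnZ = 21" "\<forall>r\<in>set GLnZ. length r = 14"
  by (simp_all add: GLnZ_def)
lemma GMnZ_facts: "length GMnZ = 20" "\<forall>r\<in>set GMnZ. length r = 14"
  by (simp_all add: GMnZ_def)
lemma XZ_facts: "length XZ = 21" "\<forall>r\<in>set XZ. length r = 20"
  by (simp_all add: XZ_def)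
lemma YZ_facts: "length YZ = 20" "\<forall>r\<in>set YZ. length r = 21"
  by (simp_all add: YZ_def)

lemma length_GLn[simp]: "length GLn = 21" by (simp add: GLn_def GLnZ_facts)
lemma length_GMn[simp]: "length GMn = 20" by (simp add: GMn_def GMnZ_facts)

lemma fmap_GLn: assumes "k < 21" shows "fmap (GLn!k) = lc (evec (XZ!k)) GMn"
proof -
  have k1: "length (GLnZ!k) = 14" using assms GLnZ_facts by auto
  have k2: "length (XZ!k) = 20" using assms XZ_facts by auto
  have c: "lcZ (GLnZ!k) FZ = map (psc 9) (lcZ (XZ!k) GMnZ)"
    using check_F assms by (simp add: list_all2_conv_all_nth GLnZ_facts XZ_facts)
  have "fmap (GLn!k) = map (\<lambda>z. z / 9) (evec (lcZ (GLnZ!k) FZ))"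
    using assms k1 by (simp add: fmap_def GLn_def Fc_def lc_evec length_FZ rows_FZ GLnZ_facts)
  also have "\<dots> = evec (lcZ (XZ!k) GMnZ)" unfolding c evec_psc by (simp add: o_def)
  also have "\<dots> = lc (evec (XZ!k)) GMn"
    using k2 by (simp add: GMn_def lc_evec GMnZ_facts)
  finally show ?thesis .
qed

lemma gmap_GMn: assumes "k < 20" shows "gmap (GMn!k) = lc (evec (YZ!k)) GLn"
proof -
  have k1: "length (GMnZ!k) = 14" using assms GMnZ_facts by auto
  have k2: "length (YZ!k) = 21" using assms YZ_facts by auto
  have c: "lcZ (GMnZ!k) GZ = map (psc 3) (lcZ (YZ!k) GLnZ)"
    using check_G assms by (simp add: list_all2_conv_all_nth GMnZ_facts YZ_facts)
  have "gmap (GMn!k) = map (\<lambda>z. z / 3) (evec (lcZ (GMnZ!k) GZ))"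
    using assms k1 by (simp add: gmap_def GMn_def Gc_def lc_evec length_GZ rows_GZ GMnZ_facts)
  also have "\<dots> = evec (lcZ (YZ!k) GLnZ)" unfolding c evec_psc by (simp add: o_def)
  also have "\<dots> = lc (evec (YZ!k)) GLn"
    using k2 by (simp add: GLn_def lc_evec GLnZ_facts)
  finally show ?thesis .
qed

lemma "omega * (x * omega) + x * omega = - (x::complex)"
proof -
  have h: "omega * omega = -1 - omega" by (rule omega_sq)
  show ?thesis using h by algebra
qed
lemma less12: "(j::nat) < 12 \<longleftrightarrow> j = 0 \<or> j = 1 \<or> j = 2 \<or> j = 3 \<or> j = 4 \<or> j = 5 \<or> j = 6 \<or> j = 7 \<or> j = 8 \<or> j = 9 \<or> j = 10 \<or> j = 11"
  by presburger
lemma golayG_eq: "golayG = [[1,0,0,0,0,0,0,1,1,1,1,1],[0,1,0,0,0,0,-1,0,1,-1,-1,1],[0,0,1,0,0,0,-1,1,0,1,-1,-1],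
  [0,0,0,1,0,0,-1,-1,1,0,1,-1],[0,0,0,0,1,0,-1,-1,-1,1,0,1],[0,0,0,0,0,1,-1,1,-1,-1,1,0]]"
  by code_simp
lemma less14: "(j::nat) < 14 \<longleftrightarrow> j = 0 \<or> j = 1 \<or> j = 2 \<or> j = 3 \<or> j = 4 \<or> j = 5 \<or> j = 6 \<or> j = 7 \<or> j = 8 \<or> j = 9 \<or> j = 10 \<or> j = 11 \<or> j = 12 \<or> j = 13"
  by presburger
lemma less6: "(j::nat) < 6 \<longleftrightarrow> j = 0 \<or> j = 1 \<or> j = 2 \<or> j = 3 \<or> j = 4 \<or> j = 5"
  by presburger
lemma sum6: "(\<Sum>i<(6::nat). f i) = f 0 + f 1 + f 2 + f 3 + f 4 + (f 5 :: 'a::comm_monoid_add)"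
  by (simp add: eval_nat_numeral ac_simps)
lemma colsum: "j < 12 \<Longrightarrow> (\<Sum>i<6. golayG!i!j) = (if j = 6 then -5 else 1)"
  unfolding less12 by (auto simp: sum6 golayG_eq)
lemma rowsum: "i < 6 \<Longrightarrow> (\<Sum>j<12. golayG!i!j) = (if i = 0 then 6 else 0)"
  unfolding less6 by (auto simp: sum12 golayG_eq)

lemma theta_sq: "theta * theta = -3"
proof -
  have "theta * theta = 1 + 4 * omega + 4 * (omega * omega)" by (simp add: theta_eq algebra_simps)
  thus ?thesis by (simp add: omega_sq)
qed

lemma cong_theta_int: "cong_theta (of_int x) (of_int y) \<longleftrightarrow> (3::int) dvd (x - y)"
  by (simp add: emb_of_int cong_theta_emb)

definition cw :: "(nat \<Rightarrow> int) \<Rightarrow> nat \<Rightarrow> int" where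
  "cw a j = (\<Sum>i<6. a i * (golayG ! i ! j))"

definition LeechAt :: "complex list \<Rightarrow> bool" where
  "LeechAt v \<longleftrightarrow> (\<exists>(m::int) a z e. (\<forall>i<12. z i \<in> Eis) \<and> e \<in> Eis \<and> (\<Sum>i<12. z i) = of_int m + theta * e
      \<and> (\<forall>i<12. v!i = of_int m + theta * of_int (cw a i) + 3 * z i))"

lemma LeechAtI:
  assumes "\<forall>i<12. z i \<in> Eis" "e \<in> Eis" "(\<Sum>i<12. z i) = of_int m + theta * e"
     "\<forall>i<12. v!i = of_int m + theta * of_int (cw a i) + 3 * z i"
  shows "LeechAt v"
  using assms unfolding LeechAt_def by blast

lemma Leech_imp_At: assumes "v \<in> Leech" shows "length v = 12" "LeechAt v"
proof -
  from assms obtain m c z where len: "length v = 12" and lc12: "length c = 12"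
    and gw: "\<exists>w\<in>golay12. reduces_to (map of_int c) w" and zE: "z \<in> Evecs 12"
    and cs: "cong_theta (sum_list z) (of_int m)"
    and vi: "\<forall>i<12. v ! i = of_int m + theta * of_int (c ! i) + 3 * z ! i"
    unfolding Leech_def by blast
  show "length v = 12" by (fact len)
  from gw obtain w where wG: "w \<in> golay12" and red: "reduces_to (map of_int c) w" by blast
  from wG obtain a where wa: "w = map (\<lambda>j. (\<Sum>i<6. a i * (golayG ! i ! j)) mod 3) [0..<12]"
    unfolding golay12_def by blast
  have dv: "(3::int) dvd (c!i - cw a i)" if i: "i < 12" for i
  proof -
    have "cong_theta (of_int (c!i)) (of_int (w!i))"
      using red i lc12 unfolding reduces_to_def by auto
    hence "(3::int) dvd (c!i - w!i)" by (simp add: cong_theta_int)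
    moreover have "w!i = cw a i mod 3" using i by (simp add: wa cw_def)
    ultimately show ?thesis by (metis dvd_add dvd_mult_div_cancel minus_mod_eq_mult_div diff_add_cancel
        dvd_triv_left add_diff_eq dvd_diff)
  qed
  define r where "r i = (c!i - cw a i) div 3" for i
  have cr: "c!i = cw a i + 3 * r i" if "i < 12" for i
    using dv[OF that] unfolding r_def by auto
  from cs obtain e where eE: "e \<in> Eis" and se: "sum_list z - of_int m = theta * e"
    unfolding cong_theta_def by blast
  have zlen: "length z = 12" and zE': "\<forall>i<12. z!i \<in> Eis" using zE by (auto simp: Evecs_def)
  have sz: "sum_list z = (\<Sum>i<12. z!i)"
    using zlen by (simp add: sum_list_sum_nth atLeast0LessThan)
  define z' where "z' i = z!i + theta * of_int (r i)" for i
  show "LeechAt v"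
  proof (rule LeechAtI[where z = z' and e = "e + of_int (\<Sum>i<12. r i)" and m = m and a = a])
    show "\<forall>i<12. z' i \<in> Eis" using zE' by (simp add: z'_def)
    show "e + of_int (\<Sum>i<12. r i) \<in> Eis" using eE by simp
    show "(\<Sum>i<12. z' i) = of_int m + theta * (e + of_int (\<Sum>i<12. r i))"
      using se sz by (simp add: z'_def sum.distrib sum_distrib_left[symmetric] algebra_simps)
    show "\<forall>i<12. v ! i = of_int m + theta * of_int (cw a i) + 3 * z' i"
      using vi cr by (simp add: z'_def algebra_simps)
  qed
qed

lemma At_imp_Leech: assumes "length v = 12" "LeechAt v" shows "v \<in> Leech"
proof -
  from assms(2) obtain m a z e where zE: "\<forall>i<12. z i \<in> Eis" and eE: "e \<in> Eis"
    and S: "(\<Sum>i<12. z i) = of_int m + theta * e"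
    and V: "\<forall>i<12. v!i = of_int m + theta * of_int (cw a i) + 3 * z i"
    unfolding LeechAt_def by blast
  define m0 where "m0 = (m + 1) mod 3 - 1"
  define km where "km = (m + 1) div 3"
  have mm: "m = 3 * km + m0" unfolding m0_def km_def by presburger
  define c where "c = map (\<lambda>i. (cw a i + 1) mod 3 - 1) [0..<12]"
  define kc where "kc i = (cw a i + 1) div 3" for i
  have cc: "cw a i = 3 * kc i + c!i" if "i < 12" for i
    using that unfolding c_def kc_def by simp presburger
  define w where "w = map (\<lambda>j. cw a j mod 3) [0..<12]"
  define z' where "z' = map (\<lambda>i. z i + of_int km + theta * of_int (kc i)) [0..<12]"
  have m0s: "m0 \<in> {0, 1, -1}" unfolding m0_def by auto
  have cs: "set c \<subseteq> {0, 1, -1}" unfolding c_def by auto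
  have wG: "w \<in> golay12" unfolding golay12_def w_def cw_def by blast
  have red: "reduces_to (map of_int c) w"
    unfolding reduces_to_def
  proof (intro conjI allI impI)
    show "length (map of_int c) = length w" by (simp add: c_def w_def)
    fix i assume "i < length (map (of_int :: int \<Rightarrow> complex) c)"
    hence i: "i < 12" by (simp add: c_def)
    have "(3::int) dvd (((cw a i + 1) mod 3 - 1) - cw a i mod 3)" by presburger
    hence h: "cong_theta (of_int ((cw a i + 1) mod 3 - 1)) (of_int (cw a i mod 3))"
      by (simp only: cong_theta_int)
    thus "cong_theta (map of_int c ! i) (of_int (w ! i))"
      using i by (simp add: c_def w_def)
  qed
  have z'E: "z' \<in> Evecs 12" using zE by (auto simp: Evecs_def z'_def)
  have sz': "sum_list z' = (\<Sum>i<12. z i) + 12 * of_int km + theta * of_int (\<Sum>i<12. kc i)"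
    by (simp add: z'_def sum_list_map_upt sum.distrib sum_distrib_left)
  have cong: "cong_theta (sum_list z') (of_int m0)"
    unfolding cong_theta_def
  proof (intro bexI)
    show "sum_list z' - of_int m0 = theta * (e - 5 * theta * of_int km + of_int (\<Sum>i<12. kc i))"
      unfolding sz' S using theta_sq
      by (simp add: mm algebra_simps) (simp add: mult.assoc[symmetric])
    show "e - 5 * theta * of_int km + of_int (\<Sum>i<12. kc i) \<in> Eis" using eE by simp
  qed
  have vv: "\<forall>i<12. v ! i = of_int m0 + theta * of_int (c ! i) + 3 * z' ! i"
  proof (intro allI impI)
    fix i :: nat assume i: "i < 12"
    show "v ! i = of_int m0 + theta * of_int (c ! i) + 3 * z' ! i"
      using V i cc[OF i] by (simp add: z'_def mm algebra_simps)
  qed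
  have clen: "length c = 12" by (simp add: c_def)
  show ?thesis unfolding Leech_def mem_Collect_eq
    using assms(1) m0s cs wG red z'E cong vv clen by blast
qed

lemma cw_add: "cw (\<lambda>i. a i + b i) j = cw a j + cw b j"
  by (simp add: cw_def sum.distrib algebra_simps)
lemma cw_mult: "cw (\<lambda>i. n * a i) j = n * cw a j"
  by (simp add: cw_def sum_distrib_left mult_ac)
lemma cw_const: "j < 12 \<Longrightarrow> cw (\<lambda>i. a i + k) j = cw a j + k * (if j = 6 then -5 else 1)"
  by (simp add: cw_def sum.distrib algebra_simps sum_distrib_left[symmetric] colsum)
lemma sum_cw: "(\<Sum>j<12. cw a j) = 6 * a 0"
proof -
  have "(\<Sum>j<12. cw a j) = (\<Sum>i<6. a i * (\<Sum>j<12. golayG!i!j))"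
    by (simp add: cw_def sum_distrib_left sum.swap[of _ "{..<12::nat}"])
  also have "\<dots> = (\<Sum>i<6. if i = 0 then 6 * a i else 0)"
    by (rule sum.cong) (auto simp: rowsum)
  also have "\<dots> = 6 * a 0" by simp
  finally show ?thesis .
qed

lemma LeechAt_add:
  assumes "LeechAt u" "LeechAt v" "\<forall>i<12. w!i = u!i + v!i"
  shows "LeechAt w"
proof -
  from assms(1) obtain m a z e where zE: "\<forall>i<12. z i \<in> Eis" and eE: "e \<in> Eis"
    and S: "(\<Sum>i<12. z i) = of_int m + theta * e"
    and V: "\<forall>i<12. u!i = of_int m + theta * of_int (cw a i) + 3 * z i"
    unfolding LeechAt_def by blast
  from assms(2) obtain m' a' z' e' where zE': "\<forall>i<12. z' i \<in> Eis" and eE': "e' \<in> Eis"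
    and S': "(\<Sum>i<12. z' i) = of_int m' + theta * e'"
    and V': "\<forall>i<12. v!i = of_int m' + theta * of_int (cw a' i) + 3 * z' i"
    unfolding LeechAt_def by blast
  show ?thesis
  proof (rule LeechAtI[where m = "m + m'" and a = "\<lambda>i. a i + a' i" and z = "\<lambda>i. z i + z' i" and e = "e + e'"])
    show "\<forall>i<12. z i + z' i \<in> Eis" using zE zE' by simp
    show "e + e' \<in> Eis" using eE eE' by simp
    show "(\<Sum>i<12. z i + z' i) = of_int (m + m') + theta * (e + e')"
      using S S' by (simp add: sum.distrib algebra_simps)
    show "\<forall>i<12. w ! i = of_int (m + m') + theta * of_int (cw (\<lambda>i. a i + a' i) i) + 3 * (z i + z' i)"
      using assms(3) V V' by (simp add: cw_add algebra_simps)
  qed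
qed

lemma LeechAt_int:
  assumes "LeechAt v" "\<forall>i<12. w!i = of_int n * v!i"
  shows "LeechAt w"
proof -
  from assms(1) obtain m a z e where zE: "\<forall>i<12. z i \<in> Eis" and eE: "e \<in> Eis"
    and S: "(\<Sum>i<12. z i) = of_int m + theta * e"
    and V: "\<forall>i<12. v!i = of_int m + theta * of_int (cw a i) + 3 * z i"
    unfolding LeechAt_def by blast
  show ?thesis
  proof (rule LeechAtI[where m = "n * m" and a = "\<lambda>i. n * a i" and z = "\<lambda>i. of_int n * z i" and e = "of_int n * e"])
    show "\<forall>i<12. of_int n * z i \<in> Eis" using zE by simp
    show "of_int n * e \<in> Eis" using eE by simp
    show "(\<Sum>i<12. of_int n * z i) = of_int (n * m) + theta * (of_int n * e)"
      using S by (simp add: sum_distrib_left[symmetric] algebra_simps)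
    show "\<forall>i<12. w ! i = of_int (n * m) + theta * of_int (cw (\<lambda>i. n * a i) i) + 3 * (of_int n * z i)"
      using assms(2) V by (simp add: cw_mult algebra_simps)
  qed
qed

lemma LeechAt_omega:
  assumes "LeechAt v" "\<forall>i<12. w!i = omega * v!i"
  shows "LeechAt w"
proof -
  from assms(1) obtain m a z e where zE: "\<forall>i<12. z i \<in> Eis" and eE: "e \<in> Eis"
    and S: "(\<Sum>i<12. z i) = of_int m + theta * e"
    and V: "\<forall>i<12. v!i = of_int m + theta * of_int (cw a i) + 3 * z i"
    unfolding LeechAt_def by blast
  define t :: "nat \<Rightarrow> int" where "t i = (if i = 6 then -2 else 0)" for i
  define z' where "z' i = omega * z i - (1 + omega) * of_int (cw a i) - (1 + omega) * of_int m
       - 2 * of_int m * theta * of_int (t i)" for i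
  define e' where "e' = (1 + omega) * of_int m + omega * e + 2 * theta * (1 + omega) * of_int (a 0)
       + 4 * theta * (1 + omega) * of_int m + 4 * of_int m"
  have h: "omega * omega = -1 - omega" by (rule omega_sq)
  have st: "(\<Sum>i<12. of_int (t i) :: complex) = -2"
    by (simp add: t_def sum12)
  show ?thesis
  proof (rule LeechAtI[where m = m and a = "\<lambda>i. a i + 2 * m" and z = z' and e = e'])
    show "\<forall>i<12. z' i \<in> Eis" using zE by (simp add: z'_def)
    show "e' \<in> Eis" using eE by (simp add: e'_def)
    have "(\<Sum>i<12. z' i) = (\<Sum>i<12. omega * z i) - (\<Sum>i<12. (1 + omega) * of_int (cw a i))
        - (\<Sum>i<(12::nat). (1 + omega) * of_int m) - (\<Sum>i<12. 2 * of_int m * theta * of_int (t i))"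
      by (simp add: z'_def sum_subtractf)
    also have "\<dots> = omega * (\<Sum>i<12. z i) - (1 + omega) * of_int (\<Sum>i<12. cw a i)
        - 12 * (1 + omega) * of_int m - 2 * of_int m * theta * (\<Sum>i<12. of_int (t i))"
      by (simp only: sum_distrib_left[symmetric] of_int_sum) simp
    also have "\<dots> = omega * (of_int m + theta * e) - (1 + omega) * (6 * of_int (a 0))
        - 12 * (1 + omega) * of_int m + 4 * of_int m * theta"
      unfolding S sum_cw st by simp
    also have "\<dots> = of_int m + theta * e'"
      unfolding e'_def theta_eq using h by algebra
    finally show "(\<Sum>i<12. z' i) = of_int m + theta * e'" .
    show "\<forall>i<12. w ! i = of_int m + theta * of_int (cw (\<lambda>i. a i + 2 * m) i) + 3 * z' i"
    proof (intro allI impI)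
      fix i :: nat assume i: "i < 12"
      have c: "cw (\<lambda>i. a i + 2 * m) i = cw a i + 2 * m * (1 + 3 * t i)"
        using i by (simp add: cw_const t_def)
      have c': "(of_int (cw (\<lambda>i. a i + 2 * m) i) :: complex) = of_int (cw a i) + 2 * of_int m * (1 + 3 * of_int (t i))"
        unfolding c by simp
      have wi: "w!i = omega * (of_int m + theta * of_int (cw a i) + 3 * z i)" using assms(2) V i by simp
      show "w ! i = of_int m + theta * of_int (cw (\<lambda>i. a i + 2 * m) i) + 3 * z' i"
        unfolding c' wi z'_def theta_eq using h by algebra
    qed
  qed
qed

lemma LeechAt_scale:
  assumes "x \<in> Eis" "LeechAt v" "\<forall>i<12. w!i = x * v!i"
  shows "LeechAt w"
proof -
  from assms(1) obtain p q where x: "x = emb p q" by (elim Eis_E)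
  define u1 where "u1 = map (\<lambda>i. of_int p * v!i) [0..<12]"
  define u2 where "u2 = map (\<lambda>i. omega * v!i) [0..<12]"
  define u3 where "u3 = map (\<lambda>i. of_int q * u2!i) [0..<12]"
  have 1: "LeechAt u1" by (rule LeechAt_int[where n=p, OF assms(2)]) (simp add: u1_def)
  have 2: "LeechAt u2" by (rule LeechAt_omega[OF assms(2)]) (simp add: u2_def)
  have 3: "LeechAt u3" by (rule LeechAt_int[where n=q, OF 2]) (simp add: u3_def)
  show ?thesis by (rule LeechAt_add[OF 1 3]) (simp add: assms(3) x u1_def u2_def u3_def emb_def algebra_simps)
qed

lemma LeechAt_zero: "\<forall>i<12. w!i = 0 \<Longrightarrow> LeechAt w"
  by (rule LeechAtI[where m = 0 and a = "\<lambda>i. 0" and z = "\<lambda>i. 0" and e = 0]) (simp_all add: cw_def)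

lemma cong_trans: "cong_theta x y \<Longrightarrow> cong_theta y z \<Longrightarrow> cong_theta x z"
  unfolding cong_theta_def
proof (elim bexE)
  fix e1 e2 assume "e1 \<in> Eis" "x - y = theta * e1" "e2 \<in> Eis" "y - z = theta * e2"
  thus "\<exists>e\<in>Eis. x - z = theta * e"
    by (intro bexI[where x = "e1 + e2"]) (auto simp: algebra_simps)
qed

lemma cong_add: "cong_theta x x' \<Longrightarrow> cong_theta y y' \<Longrightarrow> cong_theta (x + y) (x' + y')"
  unfolding cong_theta_def
proof (elim bexE)
  fix e1 e2 assume "e1 \<in> Eis" "x - x' = theta * e1" "e2 \<in> Eis" "y - y' = theta * e2"
  thus "\<exists>e\<in>Eis. x + y - (x' + y') = theta * e"
    by (intro bexI[where x = "e1 + e2"]) (auto simp: algebra_simps)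
qed

lemma cong_mult:
  assumes "x \<in> Eis" "y' \<in> Eis" "cong_theta x x'" "cong_theta y y'"
  shows "cong_theta (x * y) (x' * y')"
proof -
  from assms(3) obtain e1 where e1: "e1 \<in> Eis" "x - x' = theta * e1" unfolding cong_theta_def by blast
  from assms(4) obtain e2 where e2: "e2 \<in> Eis" "y - y' = theta * e2" unfolding cong_theta_def by blast
  have "x * y - x' * y' = x * (y - y') + (x - x') * y'" by (simp add: algebra_simps)
  also have "\<dots> = theta * (x * e2 + e1 * y')" unfolding e1 e2 by (simp add: algebra_simps)
  finally show ?thesis unfolding cong_theta_def using assms e1 e2 by auto
qed

lemma cong_refl: "cong_theta x x"
  unfolding cong_theta_def by (auto intro!: bexI[where x = 0])

lemma Eis_cong_int: "x \<in> Eis \<Longrightarrow> \<exists>r::int. cong_theta x (of_int r)"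
proof (elim Eis_E)
  fix p q assume "x = emb p q"
  thus ?thesis by (intro exI[where x = "p + q"]) (simp add: emb_of_int cong_theta_emb)
qed

definition t1 :: "int list" where "t1 = [1,1,-1,0]"
definition t2 :: "int list" where "t2 = [0,1,1,1]"

definition E8At :: "complex list \<Rightarrow> nat \<Rightarrow> bool" where
  "E8At v off \<longleftrightarrow> (\<forall>i<4. v!(off+i) \<in> Eis) \<and>
     (\<exists>\<alpha> \<beta>::int. \<forall>i<4. cong_theta (v!(off+i)) (of_int (\<alpha> * t1!i + \<beta> * t2!i)))"

lemma E8AtI:
  assumes "\<forall>i<4. w!(off+i) \<in> Eis" "\<forall>i<4. cong_theta (w!(off+i)) (of_int (al * t1!i + be * t2!i))"
  shows "E8At w off"
  using assms unfolding E8At_def by blast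

lemma dvd_mod3: "(3::int) dvd (x mod 3 - x)" "(3::int) dvd (x - x mod 3)" by presburger+

lemma E8At_add:
  assumes "E8At u off" "E8At v off" "\<forall>i<4. w!(off+i) = u!(off+i) + v!(off+i)"
  shows "E8At w off"
proof -
  from assms(1) obtain a b where u: "\<forall>i<4. u!(off+i) \<in> Eis" "\<forall>i<4. cong_theta (u!(off+i)) (of_int (a * t1!i + b * t2!i))"
    unfolding E8At_def by blast
  from assms(2) obtain a' b' where v: "\<forall>i<4. v!(off+i) \<in> Eis" "\<forall>i<4. cong_theta (v!(off+i)) (of_int (a' * t1!i + b' * t2!i))"
    unfolding E8At_def by blast
  show ?thesis
  proof (rule E8AtI[where al = "a + a'" and be = "b + b'"]; intro allI impI)
    fix i :: nat assume i: "i < 4"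
    show "w!(off+i) \<in> Eis" using u v assms(3) i by simp
    have "cong_theta (u!(off+i) + v!(off+i)) (of_int (a * t1!i + b * t2!i) + of_int (a' * t1!i + b' * t2!i))"
      using u v i by (intro cong_add) auto
    thus "cong_theta (w!(off+i)) (of_int ((a + a') * t1!i + (b + b') * t2!i))"
      using assms(3) i by (simp add: algebra_simps)
  qed
qed

lemma E8At_scale:
  assumes "x \<in> Eis" "E8At v off" "\<forall>i<4. w!(off+i) = x * v!(off+i)"
  shows "E8At w off"
proof -
  from assms(2) obtain a b where v: "\<forall>i<4. v!(off+i) \<in> Eis" "\<forall>i<4. cong_theta (v!(off+i)) (of_int (a * t1!i + b * t2!i))"
    unfolding E8At_def by blast
  from Eis_cong_int[OF assms(1)] obtain r where r: "cong_theta x (of_int r)" by blast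
  show ?thesis
  proof (rule E8AtI[where al = "r * a" and be = "r * b"]; intro allI impI)
    fix i :: nat assume i: "i < 4"
    show "w!(off+i) \<in> Eis" using v assms(1,3) i by simp
    have "cong_theta (x * v!(off+i)) (of_int r * of_int (a * t1!i + b * t2!i))"
      using v i assms(1) r by (intro cong_mult) auto
    thus "cong_theta (w!(off+i)) (of_int (r * a * t1!i + r * b * t2!i))"
      using assms(3) i by (simp add: algebra_simps)
  qed
qed

lemma E8At_zero: "\<forall>i<4. w!(off+i) = 0 \<Longrightarrow> E8At w off"
  unfolding E8At_def by (auto intro!: exI[where x = 0] cong_refl)

lemma E8At_cong: "E8At v off \<Longrightarrow> \<forall>i<4. w!(off'+i) = v!(off+i) \<Longrightarrow> E8At w off'"
  unfolding E8At_def by auto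

lemma E8E_imp: assumes "v \<in> E8E" shows "length v = 4" "E8At v 0"
proof -
  from assms obtain w where vE: "v \<in> Evecs 4" and wT: "w \<in> tetracode" and red: "reduces_to v w"
    unfolding E8E_def by blast
  show "length v = 4" using vE by (simp add: Evecs_def)
  from wT obtain a b where w: "w = map (\<lambda>j. (a * ([1,1,-1,0] ! j) + b * ([0,1,1,1] ! j)) mod 3) [0..<4]"
    unfolding tetracode_def by blast
  show "E8At v 0"
  proof (rule E8AtI[where al = a and be = b]; intro allI impI)
    fix i :: nat assume i: "i < 4"
    show "v!(0+i) \<in> Eis" using vE i by (auto simp: Evecs_def)
    have c1: "cong_theta (v!i) (of_int (w!i))" using red i w unfolding reduces_to_def by auto
    have c2': "cong_theta (of_int ((a * t1!i + b * t2!i) mod 3)) (of_int (a * t1!i + b * t2!i))"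
      by (simp only: cong_theta_int dvd_mod3)
    have wi: "w!i = (a * t1!i + b * t2!i) mod 3" using i by (simp add: w t1_def t2_def)
    have c2: "cong_theta (of_int (w!i)) (of_int (a * t1!i + b * t2!i))"
      unfolding wi by (fact c2')
    show "cong_theta (v!(0+i)) (of_int (a * t1!i + b * t2!i))"
      using cong_trans[OF c1 c2] by simp
  qed
qed

lemma E8At_imp: assumes "length v = 4" "E8At v 0" shows "v \<in> E8E"
proof -
  from assms(2) obtain a b where vE: "\<forall>i<4. v!i \<in> Eis" and c: "\<forall>i<4. cong_theta (v!i) (of_int (a * t1!i + b * t2!i))"
    unfolding E8At_def by auto
  define w where "w = map (\<lambda>j. (a * ([1,1,-1,0] ! j) + b * ([0,1,1,1] ! j)) mod 3) [0..<4]"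
  have wT: "w \<in> tetracode" unfolding tetracode_def w_def by blast
  have red: "reduces_to v w" unfolding reduces_to_def
  proof (intro conjI allI impI)
    show "length v = length w" using assms(1) by (simp add: w_def)
    fix i assume "i < length v" hence i: "i < 4" using assms(1) by simp
    have c2': "cong_theta (of_int (a * t1!i + b * t2!i)) (of_int ((a * t1!i + b * t2!i) mod 3))"
      by (simp only: cong_theta_int dvd_mod3)
    have wi: "w!i = (a * t1!i + b * t2!i) mod 3" using i by (simp add: w_def t1_def t2_def)
    have c2: "cong_theta (of_int (a * t1!i + b * t2!i)) (of_int (w!i))"
      unfolding wi by (fact c2')
    show "cong_theta (v!i) (of_int (w!i))" using cong_trans[OF _ c2] c i by auto
  qed
  have "v \<in> Evecs 4" using assms(1) vE by (auto simp: Evecs_def set_conv_nth)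
  thus ?thesis unfolding E8E_def using wT red by blast
qed

lemma LeechAt_cong: "LeechAt v \<Longrightarrow> \<forall>i<12. w!i = v!i \<Longrightarrow> LeechAt w"
  unfolding LeechAt_def by auto

definition LbigC :: "complex list \<Rightarrow> bool" where
  "LbigC v \<longleftrightarrow> length v = 14 \<and> LeechAt v \<and> v!12 \<in> Eis \<and> v!13 \<in> Eis"

definition E8C :: "complex list \<Rightarrow> bool" where
  "E8C v \<longleftrightarrow> length v = 14 \<and> E8At v 0 \<and> E8At v 4 \<and> E8At v 8 \<and> v!12 \<in> Eis \<and> v!13 \<in> Eis"

lemma drop12: "length v = 14 \<Longrightarrow> drop 12 v = [v!12, v!13]"
  by (rule nth_equalityI) (auto simp: less_Suc_eq numeral_eq_Suc)

lemma Lbig_iff: "v \<in> Lbig \<longleftrightarrow> LbigC v"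
proof
  assume "v \<in> Lbig"
  then obtain u h where v: "v = u @ h" and u: "u \<in> Leech" and h: "h \<in> Hplane"
    unfolding Lbig_def by blast
  have lu: "length u = 12" and au: "LeechAt u" using Leech_imp_At[OF u] by auto
  have lh: "length h = 2" and hE: "set h \<subseteq> Eis" using h by (auto simp: Hplane_def Evecs_def)
  have "h!0 \<in> Eis" "h!1 \<in> Eis" using hE lh nth_mem[of 0 h] nth_mem[of 1 h] by auto
  moreover have "LeechAt v" using au by (rule LeechAt_cong) (simp add: v lu nth_append)
  ultimately show "LbigC v" unfolding LbigC_def using lu lh by (simp add: v nth_append)
next
  assume c: "LbigC v"
  hence len: "length v = 14" and a: "LeechAt v" and e: "v!12 \<in> Eis" "v!13 \<in> Eis"
    by (auto simp: LbigC_def)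
  have "take 12 v \<in> Leech"
    by (rule At_imp_Leech) (use len in simp, rule LeechAt_cong[OF a], simp)
  moreover have "drop 12 v \<in> Hplane" using e len by (simp add: drop12 Hplane_def Evecs_def)
  ultimately show "v \<in> Lbig" unfolding Lbig_def
    by (intro CollectI exI[where x = "take 12 v"] exI[where x = "drop 12 v"]) simp
qed

lemma E8cubeH_iff: "v \<in> E8cubeH \<longleftrightarrow> E8C v"
proof
  assume "v \<in> E8cubeH"
  then obtain a b c h where v: "v = a @ b @ c @ h" and abc: "a \<in> E8E" "b \<in> E8E" "c \<in> E8E" and h: "h \<in> Hplane"
    unfolding E8cubeH_def by blast
  have la: "length a = 4" "length b = 4" "length c = 4" using E8E_imp abc by auto
  have ea: "E8At a 0" "E8At b 0" "E8At c 0" using E8E_imp abc by auto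
  have lh: "length h = 2" and hE: "set h \<subseteq> Eis" using h by (auto simp: Hplane_def Evecs_def)
  have "h!0 \<in> Eis" "h!1 \<in> Eis" using hE lh nth_mem[of 0 h] nth_mem[of 1 h] by auto
  moreover have "E8At v 0" by (rule E8At_cong[OF ea(1)]) (simp add: v la nth_append)
  moreover have "E8At v 4" by (rule E8At_cong[OF ea(2)]) (simp add: v la nth_append)
  moreover have "E8At v 8" by (rule E8At_cong[OF ea(3)]) (simp add: v la nth_append)
  ultimately show "E8C v" unfolding E8C_def using la lh by (simp add: v nth_append)
next
  assume c: "E8C v"
  hence len: "length v = 14" and e: "E8At v 0" "E8At v 4" "E8At v 8" "v!12 \<in> Eis" "v!13 \<in> Eis"
    by (auto simp: E8C_def)
  have l1: "length (take 4 v) = 4" "length (take 4 (drop 4 v)) = 4" "length (take 4 (drop 8 v)) = 4"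
    using len by simp_all
  have n1: "\<forall>i<4. (take 4 v) ! (0+i) = v ! (0+i)" using len by simp
  have n2: "\<forall>i<4. (take 4 (drop 4 v)) ! (0+i) = v ! (4+i)" using len by simp
  have n3: "\<forall>i<4. (take 4 (drop 8 v)) ! (0+i) = v ! (8+i)" using len by simp
  have "take 4 v \<in> E8E" by (rule E8At_imp[OF l1(1) E8At_cong[OF e(1) n1]])
  moreover have "take 4 (drop 4 v) \<in> E8E" by (rule E8At_imp[OF l1(2) E8At_cong[OF e(2) n2]])
  moreover have "take 4 (drop 8 v) \<in> E8E" by (rule E8At_imp[OF l1(3) E8At_cong[OF e(3) n3]])
  moreover have "drop 12 v \<in> Hplane" using e len by (simp add: drop12 Hplane_def Evecs_def)
  moreover have "v = take 4 v @ take 4 (drop 4 v) @ take 4 (drop 8 v) @ drop 12 v"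
  proof -
    have d1: "drop 4 (drop 4 v) = drop 8 v" by simp
    have d2: "drop 4 (drop 8 v) = drop 12 v" by simp
    have "v = take 4 v @ drop 4 v" by simp
    also have "drop 4 v = take 4 (drop 4 v) @ drop 8 v"
      using append_take_drop_id[of 4 "drop 4 v"] d1 by simp
    also have "drop 8 v = take 4 (drop 8 v) @ drop 12 v"
      using append_take_drop_id[of 4 "drop 8 v"] d2 by simp
    finally show ?thesis .
  qed
  ultimately show "v \<in> E8cubeH" unfolding E8cubeH_def by blast
qed

lemma LbigC_add: "LbigC u \<Longrightarrow> LbigC v \<Longrightarrow> LbigC (vadd u v)"
  unfolding LbigC_def by (auto simp: nth_vadd intro: LeechAt_add)
lemma LbigC_scale: "x \<in> Eis \<Longrightarrow> LbigC u \<Longrightarrow> LbigC (vscale x u)"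
  unfolding LbigC_def by (auto simp: nth_vscale intro: LeechAt_scale)
lemma LbigC_zero: "LbigC (replicate 14 0)"
  unfolding LbigC_def by (auto intro: LeechAt_zero)

lemma E8C_add: "E8C u \<Longrightarrow> E8C v \<Longrightarrow> E8C (vadd u v)"
  unfolding E8C_def by (auto simp: nth_vadd intro: E8At_add)
lemma E8C_scale: "x \<in> Eis \<Longrightarrow> E8C u \<Longrightarrow> E8C (vscale x u)"
  unfolding E8C_def by (auto simp: nth_vscale intro: E8At_scale)
lemma E8C_zero: "E8C (replicate 14 0)"
  unfolding E8C_def by (auto intro: E8At_zero)

lemma lc_closed:
  assumes P0: "P (replicate 14 0)"
    and Padd: "\<And>u v. P u \<Longrightarrow> P v \<Longrightarrow> P (vadd u v)"
    and Psc: "\<And>x u. x \<in> Eis \<Longrightarrow> P u \<Longrightarrow> P (vscale x u)"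
    and len: "\<And>u. P u \<Longrightarrow> length u = 14"
    and G: "\<forall>g\<in>set G. P g" and x: "length x = length G" "set x \<subseteq> Eis"
  shows "P (lc x G)"
proof -
  define ps where "ps n = map (\<lambda>j. \<Sum>k<n. x!k * G!k!j) [0..<14]" for n
  have "n \<le> length G \<longrightarrow> P (ps n)" for n
  proof (induction n)
    case 0
    have "ps 0 = replicate 14 0" by (simp add: ps_def map_replicate_const)
    thus ?case using P0 by simp
  next
    case (Suc n)
    show ?case
    proof
      assume n: "Suc n \<le> length G"
      have gn: "P (G!n)" using G n by auto
      have xn: "x!n \<in> Eis" using x n nth_mem[of n x] by auto
      have lg: "length (G!n) = 14" using len[OF gn] .
      have "ps (Suc n) = vadd (ps n) (vscale (x!n) (G!n))"
        by (rule nth_equalityI) (auto simp: ps_def lg nth_vadd nth_vscale)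
      thus "P (ps (Suc n))" using Suc n Padd Psc gn xn by auto
    qed
  qed
  moreover have "lc x G = ps (length G)" by (simp add: lc_def ps_def)
  ultimately show ?thesis by simp
qed

lemma LbigC_lc: "\<forall>g\<in>set G. LbigC g \<Longrightarrow> length x = length G \<Longrightarrow> set x \<subseteq> Eis \<Longrightarrow> LbigC (lc x G)"
  by (rule lc_closed[where P = LbigC, OF LbigC_zero LbigC_add LbigC_scale]) (auto simp: LbigC_def)
lemma E8C_lc: "\<forall>g\<in>set G. E8C g \<Longrightarrow> length x = length G \<Longrightarrow> set x \<subseteq> Eis \<Longrightarrow> E8C (lc x G)"
  by (rule lc_closed[where P = E8C, OF E8C_zero E8C_add E8C_scale]) (auto simp: E8C_def)

lemma less21: "(j::nat) < 21 \<longleftrightarrow> j = 0 \<or> j = 1 \<or> j = 2 \<or> j = 3 \<or> j = 4 \<or> j = 5 \<or> j = 6 \<or> j = 7 \<or> j = 8 \<or> j = 9 \<or> j = 10 \<or> j = 11 \<or> j = 12 \<or> j = 13 \<or> j = 14 \<or> j = 15 \<or> j = 16 \<or> j = 17 \<or> j = 18 \<or> j = 19 \<or> j = 20" by presburger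
lemma less20: "(j::nat) < 20 \<longleftrightarrow> j = 0 \<or> j = 1 \<or> j = 2 \<or> j = 3 \<or> j = 4 \<or> j = 5 \<or> j = 6 \<or> j = 7 \<or> j = 8 \<or> j = 9 \<or> j = 10 \<or> j = 11 \<or> j = 12 \<or> j = 13 \<or> j = 14 \<or> j = 15 \<or> j = 16 \<or> j = 17 \<or> j = 18 \<or> j = 19" by presburger
lemma less4: "(j::nat) < 4 \<longleftrightarrow> j = 0 \<or> j = 1 \<or> j = 2 \<or> j = 3" by presburger

lemma emb3: "emb 3 0 = 3" by (simp add: emb_def)

lemma LeechAtI_Z:
  assumes "12 \<le> length r"
    and "psum (map zz [0..<12]) = padd (m,0) (pmul (1,2) ee)"
    and "\<forall>i<12. r!i = padd (padd (m,0) (pmul (1,2) (cw a i, 0))) (pmul (3,0) (zz i))"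
  shows "LeechAt (evec r)"
proof (rule LeechAtI[where m = m and a = a and z = "\<lambda>i. ep (zz i)" and e = "ep ee"])
  show "\<forall>i<12. ep (zz i) \<in> Eis" by (simp add: ep_def)
  show "ep ee \<in> Eis" by (simp add: ep_def)
  have "(\<Sum>i<12. ep (zz i)) = ep (psum (map zz [0..<12]))"
    by (simp add: ep_psum sum_list_map_upt o_def)
  thus "(\<Sum>i<12. ep (zz i)) = of_int m + theta * ep ee"
    unfolding assms(2) by (simp add: ep_padd ep_pmul emb_theta emb_of_int)
  show "\<forall>i<12. evec r ! i = of_int m + theta * of_int (cw a i) + 3 * ep (zz i)"
    using assms(1,3) by (simp add: evec_def ep_padd ep_pmul emb_theta emb_of_int emb_mult emb_add emb3)
qed

lemma E8AtI_Z:
  assumes "off + 4 \<le> length r"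
    and "\<forall>i<4. (3::int) dvd (fst (r!(off+i)) + snd (r!(off+i)) - (al * t1!i + be * t2!i))"
  shows "E8At (evec r) off"
proof (rule E8AtI[where al = al and be = be])
  show "\<forall>i<4. evec r ! (off + i) \<in> Eis" using assms(1) by (simp add: evec_def ep_def)
  show "\<forall>i<4. cong_theta (evec r ! (off + i)) (of_int (al * t1 ! i + be * t2 ! i))"
    using assms by (simp add: evec_def ep_def emb_of_int cong_theta_emb)
qed

lemma GLn_nth: "k < 21 \<Longrightarrow> GLn!k = evec (GLnZ!k)" by (simp add: GLn_def GLnZ_facts)
lemma GMn_nth: "k < 20 \<Longrightarrow> GMn!k = evec (GMnZ!k)" by (simp add: GMn_def GMnZ_facts)

lemma GLn_0: "LbigC (evec (GLnZ!0))"
  unfolding LbigC_def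
  apply (intro conjI)
  apply (simp add: GLnZ_def evec_def)
  apply (rule LeechAtI_Z[where m = "1" and a = "\<lambda>i. 0" and zz = "\<lambda>i. if i = 0 then (1,0) else (0,0)" and ee = "(0,0)"])
  apply (simp add: GLnZ_def)
  apply code_simp
  unfolding less12 apply (auto simp: cw_def sum6 golayG_eq GLnZ_def)[1]
  apply (simp_all add: GLnZ_def evec_def ep_def)
  done

lemma GLn_1: "LbigC (evec (GLnZ!1))"
  unfolding LbigC_def
  apply (intro conjI)
  apply (simp add: GLnZ_def evec_def)
  apply (rule LeechAtI_Z[where m = "0" and a = "\<lambda>i. if i = 0 then 1 else 0" and zz = "\<lambda>i. (0,0)" and ee = "(0,0)"])
  apply (simp add: GLnZ_def)
  apply code_simp
  unfolding less12 apply (auto simp: cw_def sum6 golayG_eq GLnZ_def)[1]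
  apply (simp_all add: GLnZ_def evec_def ep_def)
  done

lemma GLn_2: "LbigC (evec (GLnZ!2))"
  unfolding LbigC_def
  apply (intro conjI)
  apply (simp add: GLnZ_def evec_def)
  apply (rule LeechAtI_Z[where m = "0" and a = "\<lambda>i. if i = 1 then 1 else 0" and zz = "\<lambda>i. (0,0)" and ee = "(0,0)"])
  apply (simp add: GLnZ_def)
  apply code_simp
  unfolding less12 apply (auto simp: cw_def sum6 golayG_eq GLnZ_def)[1]
  apply (simp_all add: GLnZ_def evec_def ep_def)
  done

lemma GLn_3: "LbigC (evec (GLnZ!3))"
  unfolding LbigC_def
  apply (intro conjI)
  apply (simp add: GLnZ_def evec_def)
  apply (rule LeechAtI_Z[where m = "0" and a = "\<lambda>i. if i = 2 then 1 else 0" and zz = "\<lambda>i. (0,0)" and ee = "(0,0)"])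
  apply (simp add: GLnZ_def)
  apply code_simp
  unfolding less12 apply (auto simp: cw_def sum6 golayG_eq GLnZ_def)[1]
  apply (simp_all add: GLnZ_def evec_def ep_def)
  done

lemma GLn_4: "LbigC (evec (GLnZ!4))"
  unfolding LbigC_def
  apply (intro conjI)
  apply (simp add: GLnZ_def evec_def)
  apply (rule LeechAtI_Z[where m = "0" and a = "\<lambda>i. if i = 3 then 1 else 0" and zz = "\<lambda>i. (0,0)" and ee = "(0,0)"])
  apply (simp add: GLnZ_def)
  apply code_simp
  unfolding less12 apply (auto simp: cw_def sum6 golayG_eq GLnZ_def)[1]
  apply (simp_all add: GLnZ_def evec_def ep_def)
  done

lemma GLn_5: "LbigC (evec (GLnZ!5))"
  unfolding LbigC_def
  apply (intro conjI)
  apply (simp add: GLnZ_def evec_def)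
  apply (rule LeechAtI_Z[where m = "0" and a = "\<lambda>i. if i = 4 then 1 else 0" and zz = "\<lambda>i. (0,0)" and ee = "(0,0)"])
  apply (simp add: GLnZ_def)
  apply code_simp
  unfolding less12 apply (auto simp: cw_def sum6 golayG_eq GLnZ_def)[1]
  apply (simp_all add: GLnZ_def evec_def ep_def)
  done

lemma GLn_6: "LbigC (evec (GLnZ!6))"
  unfolding LbigC_def
  apply (intro conjI)
  apply (simp add: GLnZ_def evec_def)
  apply (rule LeechAtI_Z[where m = "0" and a = "\<lambda>i. if i = 5 then 1 else 0" and zz = "\<lambda>i. (0,0)" and ee = "(0,0)"])
  apply (simp add: GLnZ_def)
  apply code_simp
  unfolding less12 apply (auto simp: cw_def sum6 golayG_eq GLnZ_def)[1]
  apply (simp_all add: GLnZ_def evec_def ep_def)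
  done

lemma GLn_7: "LbigC (evec (GLnZ!7))"
  unfolding LbigC_def
  apply (intro conjI)
  apply (simp add: GLnZ_def evec_def)
  apply (rule LeechAtI_Z[where m = "0" and a = "\<lambda>i. 0" and zz = "\<lambda>i. if i = 0 then (1,2) else (0,0)" and ee = "(1,0)"])
  apply (simp add: GLnZ_def)
  apply code_simp
  unfolding less12 apply (auto simp: cw_def sum6 golayG_eq GLnZ_def)[1]
  apply (simp_all add: GLnZ_def evec_def ep_def)
  done

lemma GLn_8: "LbigC (evec (GLnZ!8))"
  unfolding LbigC_def
  apply (intro conjI)
  apply (simp add: GLnZ_def evec_def)
  apply (rule LeechAtI_Z[where m = "0" and a = "\<lambda>i. 0" and zz = "\<lambda>i. if i = 1 then (1,0) else if i = 0 then (-1,0) else (0,0)" and ee = "(0,0)"])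
  apply (simp add: GLnZ_def)
  apply code_simp
  unfolding less12 apply (auto simp: cw_def sum6 golayG_eq GLnZ_def)[1]
  apply (simp_all add: GLnZ_def evec_def ep_def)
  done

lemma GLn_9: "LbigC (evec (GLnZ!9))"
  unfolding LbigC_def
  apply (intro conjI)
  apply (simp add: GLnZ_def evec_def)
  apply (rule LeechAtI_Z[where m = "0" and a = "\<lambda>i. 0" and zz = "\<lambda>i. if i = 2 then (1,0) else if i = 0 then (-1,0) else (0,0)" and ee = "(0,0)"])
  apply (simp add: GLnZ_def)
  apply code_simp
  unfolding less12 apply (auto simp: cw_def sum6 golayG_eq GLnZ_def)[1]
  apply (simp_all add: GLnZ_def evec_def ep_def)
  done

lemma GLn_10: "LbigC (evec (GLnZ!10))"
  unfolding LbigC_def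
  apply (intro conjI)
  apply (simp add: GLnZ_def evec_def)
  apply (rule LeechAtI_Z[where m = "0" and a = "\<lambda>i. 0" and zz = "\<lambda>i. if i = 3 then (1,0) else if i = 0 then (-1,0) else (0,0)" and ee = "(0,0)"])
  apply (simp add: GLnZ_def)
  apply code_simp
  unfolding less12 apply (auto simp: cw_def sum6 golayG_eq GLnZ_def)[1]
  apply (simp_all add: GLnZ_def evec_def ep_def)
  done

lemma GLn_11: "LbigC (evec (GLnZ!11))"
  unfolding LbigC_def
  apply (intro conjI)
  apply (simp add: GLnZ_def evec_def)
  apply (rule LeechAtI_Z[where m = "0" and a = "\<lambda>i. 0" and zz = "\<lambda>i. if i = 4 then (1,0) else if i = 0 then (-1,0) else (0,0)" and ee = "(0,0)"])
  apply (simp add: GLnZ_def)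
  apply code_simp
  unfolding less12 apply (auto simp: cw_def sum6 golayG_eq GLnZ_def)[1]
  apply (simp_all add: GLnZ_def evec_def ep_def)
  done

lemma GLn_12: "LbigC (evec (GLnZ!12))"
  unfolding LbigC_def
  apply (intro conjI)
  apply (simp add: GLnZ_def evec_def)
  apply (rule LeechAtI_Z[where m = "0" and a = "\<lambda>i. 0" and zz = "\<lambda>i. if i = 5 then (1,0) else if i = 0 then (-1,0) else (0,0)" and ee = "(0,0)"])
  apply (simp add: GLnZ_def)
  apply code_simp
  unfolding less12 apply (auto simp: cw_def sum6 golayG_eq GLnZ_def)[1]
  apply (simp_all add: GLnZ_def evec_def ep_def)
  done

lemma GLn_13: "LbigC (evec (GLnZ!13))"
  unfolding LbigC_def
  apply (intro conjI)
  apply (simp add: GLnZ_def evec_def)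
  apply (rule LeechAtI_Z[where m = "0" and a = "\<lambda>i. 0" and zz = "\<lambda>i. if i = 6 then (1,0) else if i = 0 then (-1,0) else (0,0)" and ee = "(0,0)"])
  apply (simp add: GLnZ_def)
  apply code_simp
  unfolding less12 apply (auto simp: cw_def sum6 golayG_eq GLnZ_def)[1]
  apply (simp_all add: GLnZ_def evec_def ep_def)
  done

lemma GLn_14: "LbigC (evec (GLnZ!14))"
  unfolding LbigC_def
  apply (intro conjI)
  apply (simp add: GLnZ_def evec_def)
  apply (rule LeechAtI_Z[where m = "0" and a = "\<lambda>i. 0" and zz = "\<lambda>i. if i = 7 then (1,0) else if i = 0 then (-1,0) else (0,0)" and ee = "(0,0)"])
  apply (simp add: GLnZ_def)
  apply code_simp
  unfolding less12 apply (auto simp: cw_def sum6 golayG_eq GLnZ_def)[1]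
  apply (simp_all add: GLnZ_def evec_def ep_def)
  done

lemma GLn_15: "LbigC (evec (GLnZ!15))"
  unfolding LbigC_def
  apply (intro conjI)
  apply (simp add: GLnZ_def evec_def)
  apply (rule LeechAtI_Z[where m = "0" and a = "\<lambda>i. 0" and zz = "\<lambda>i. if i = 8 then (1,0) else if i = 0 then (-1,0) else (0,0)" and ee = "(0,0)"])
  apply (simp add: GLnZ_def)
  apply code_simp
  unfolding less12 apply (auto simp: cw_def sum6 golayG_eq GLnZ_def)[1]
  apply (simp_all add: GLnZ_def evec_def ep_def)
  done

lemma GLn_16: "LbigC (evec (GLnZ!16))"
  unfolding LbigC_def
  apply (intro conjI)
  apply (simp add: GLnZ_def evec_def)
  apply (rule LeechAtI_Z[where m = "0" and a = "\<lambda>i. 0" and zz = "\<lambda>i. if i = 9 then (1,0) else if i = 0 then (-1,0) else (0,0)" and ee = "(0,0)"])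
  apply (simp add: GLnZ_def)
  apply code_simp
  unfolding less12 apply (auto simp: cw_def sum6 golayG_eq GLnZ_def)[1]
  apply (simp_all add: GLnZ_def evec_def ep_def)
  done

lemma GLn_17: "LbigC (evec (GLnZ!17))"
  unfolding LbigC_def
  apply (intro conjI)
  apply (simp add: GLnZ_def evec_def)
  apply (rule LeechAtI_Z[where m = "0" and a = "\<lambda>i. 0" and zz = "\<lambda>i. if i = 10 then (1,0) else if i = 0 then (-1,0) else (0,0)" and ee = "(0,0)"])
  apply (simp add: GLnZ_def)
  apply code_simp
  unfolding less12 apply (auto simp: cw_def sum6 golayG_eq GLnZ_def)[1]
  apply (simp_all add: GLnZ_def evec_def ep_def)
  done

lemma GLn_18: "LbigC (evec (GLnZ!18))"
  unfolding LbigC_def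
  apply (intro conjI)
  apply (simp add: GLnZ_def evec_def)
  apply (rule LeechAtI_Z[where m = "0" and a = "\<lambda>i. 0" and zz = "\<lambda>i. if i = 11 then (1,0) else if i = 0 then (-1,0) else (0,0)" and ee = "(0,0)"])
  apply (simp add: GLnZ_def)
  apply code_simp
  unfolding less12 apply (auto simp: cw_def sum6 golayG_eq GLnZ_def)[1]
  apply (simp_all add: GLnZ_def evec_def ep_def)
  done

lemma GLn_19: "LbigC (evec (GLnZ!19))"
  unfolding LbigC_def
  apply (intro conjI)
  apply (simp add: GLnZ_def evec_def)
  apply (rule LeechAtI_Z[where m = "0" and a = "\<lambda>i. 0" and zz = "\<lambda>i. (0,0)" and ee = "(0,0)"])
  apply (simp add: GLnZ_def)
  apply code_simp
  unfolding less12 apply (auto simp: cw_def sum6 golayG_eq GLnZ_def)[1]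
  apply (simp_all add: GLnZ_def evec_def ep_def)
  done

lemma GLn_20: "LbigC (evec (GLnZ!20))"
  unfolding LbigC_def
  apply (intro conjI)
  apply (simp add: GLnZ_def evec_def)
  apply (rule LeechAtI_Z[where m = "0" and a = "\<lambda>i. 0" and zz = "\<lambda>i. (0,0)" and ee = "(0,0)"])
  apply (simp add: GLnZ_def)
  apply code_simp
  unfolding less12 apply (auto simp: cw_def sum6 golayG_eq GLnZ_def)[1]
  apply (simp_all add: GLnZ_def evec_def ep_def)
  done

lemma GMn_0: "E8C (evec (GMnZ!0))"
  unfolding E8C_def
  apply (intro conjI)
  apply (simp add: GMnZ_def evec_def)
  apply (rule E8AtI_Z[where al = 1 and be = 0]; simp add: GMnZ_def less4 t1_def t2_def)
  apply (rule E8AtI_Z[where al = 0 and be = 0]; simp add: GMnZ_def less4 t1_def t2_def)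
  apply (rule E8AtI_Z[where al = 0 and be = 0]; simp add: GMnZ_def less4 t1_def t2_def)
  apply (simp_all add: GMnZ_def evec_def ep_def)
  done

lemma GMn_1: "E8C (evec (GMnZ!1))"
  unfolding E8C_def
  apply (intro conjI)
  apply (simp add: GMnZ_def evec_def)
  apply (rule E8AtI_Z[where al = 0 and be = 1]; simp add: GMnZ_def less4 t1_def t2_def)
  apply (rule E8AtI_Z[where al = 0 and be = 0]; simp add: GMnZ_def less4 t1_def t2_def)
  apply (rule E8AtI_Z[where al = 0 and be = 0]; simp add: GMnZ_def less4 t1_def t2_def)
  apply (simp_all add: GMnZ_def evec_def ep_def)
  done

lemma GMn_2: "E8C (evec (GMnZ!2))"
  unfolding E8C_def
  apply (intro conjI)
  apply (simp add: GMnZ_def evec_def)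
  apply (rule E8AtI_Z[where al = 0 and be = 0]; simp add: GMnZ_def less4 t1_def t2_def)
  apply (rule E8AtI_Z[where al = 0 and be = 0]; simp add: GMnZ_def less4 t1_def t2_def)
  apply (rule E8AtI_Z[where al = 0 and be = 0]; simp add: GMnZ_def less4 t1_def t2_def)
  apply (simp_all add: GMnZ_def evec_def ep_def)
  done

lemma GMn_3: "E8C (evec (GMnZ!3))"
  unfolding E8C_def
  apply (intro conjI)
  apply (simp add: GMnZ_def evec_def)
  apply (rule E8AtI_Z[where al = 0 and be = 0]; simp add: GMnZ_def less4 t1_def t2_def)
  apply (rule E8AtI_Z[where al = 0 and be = 0]; simp add: GMnZ_def less4 t1_def t2_def)
  apply (rule E8AtI_Z[where al = 0 and be = 0]; simp add: GMnZ_def less4 t1_def t2_def)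
  apply (simp_all add: GMnZ_def evec_def ep_def)
  done

lemma GMn_4: "E8C (evec (GMnZ!4))"
  unfolding E8C_def
  apply (intro conjI)
  apply (simp add: GMnZ_def evec_def)
  apply (rule E8AtI_Z[where al = 0 and be = 0]; simp add: GMnZ_def less4 t1_def t2_def)
  apply (rule E8AtI_Z[where al = 0 and be = 0]; simp add: GMnZ_def less4 t1_def t2_def)
  apply (rule E8AtI_Z[where al = 0 and be = 0]; simp add: GMnZ_def less4 t1_def t2_def)
  apply (simp_all add: GMnZ_def evec_def ep_def)
  done

lemma GMn_5: "E8C (evec (GMnZ!5))"
  unfolding E8C_def
  apply (intro conjI)
  apply (simp add: GMnZ_def evec_def)
  apply (rule E8AtI_Z[where al = 0 and be = 0]; simp add: GMnZ_def less4 t1_def t2_def)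
  apply (rule E8AtI_Z[where al = 0 and be = 0]; simp add: GMnZ_def less4 t1_def t2_def)
  apply (rule E8AtI_Z[where al = 0 and be = 0]; simp add: GMnZ_def less4 t1_def t2_def)
  apply (simp_all add: GMnZ_def evec_def ep_def)
  done

lemma GMn_6: "E8C (evec (GMnZ!6))"
  unfolding E8C_def
  apply (intro conjI)
  apply (simp add: GMnZ_def evec_def)
  apply (rule E8AtI_Z[where al = 0 and be = 0]; simp add: GMnZ_def less4 t1_def t2_def)
  apply (rule E8AtI_Z[where al = 1 and be = 0]; simp add: GMnZ_def less4 t1_def t2_def)
  apply (rule E8AtI_Z[where al = 0 and be = 0]; simp add: GMnZ_def less4 t1_def t2_def)
  apply (simp_all add: GMnZ_def evec_def ep_def)
  done

lemma GMn_7: "E8C (evec (GMnZ!7))"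
  unfolding E8C_def
  apply (intro conjI)
  apply (simp add: GMnZ_def evec_def)
  apply (rule E8AtI_Z[where al = 0 and be = 0]; simp add: GMnZ_def less4 t1_def t2_def)
  apply (rule E8AtI_Z[where al = 0 and be = 1]; simp add: GMnZ_def less4 t1_def t2_def)
  apply (rule E8AtI_Z[where al = 0 and be = 0]; simp add: GMnZ_def less4 t1_def t2_def)
  apply (simp_all add: GMnZ_def evec_def ep_def)
  done

lemma GMn_8: "E8C (evec (GMnZ!8))"
  unfolding E8C_def
  apply (intro conjI)
  apply (simp add: GMnZ_def evec_def)
  apply (rule E8AtI_Z[where al = 0 and be = 0]; simp add: GMnZ_def less4 t1_def t2_def)
  apply (rule E8AtI_Z[where al = 0 and be = 0]; simp add: GMnZ_def less4 t1_def t2_def)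
  apply (rule E8AtI_Z[where al = 0 and be = 0]; simp add: GMnZ_def less4 t1_def t2_def)
  apply (simp_all add: GMnZ_def evec_def ep_def)
  done

lemma GMn_9: "E8C (evec (GMnZ!9))"
  unfolding E8C_def
  apply (intro conjI)
  apply (simp add: GMnZ_def evec_def)
  apply (rule E8AtI_Z[where al = 0 and be = 0]; simp add: GMnZ_def less4 t1_def t2_def)
  apply (rule E8AtI_Z[where al = 0 and be = 0]; simp add: GMnZ_def less4 t1_def t2_def)
  apply (rule E8AtI_Z[where al = 0 and be = 0]; simp add: GMnZ_def less4 t1_def t2_def)
  apply (simp_all add: GMnZ_def evec_def ep_def)
  done

lemma GMn_10: "E8C (evec (GMnZ!10))"
  unfolding E8C_def
  apply (intro conjI)
  apply (simp add: GMnZ_def evec_def)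
  apply (rule E8AtI_Z[where al = 0 and be = 0]; simp add: GMnZ_def less4 t1_def t2_def)
  apply (rule E8AtI_Z[where al = 0 and be = 0]; simp add: GMnZ_def less4 t1_def t2_def)
  apply (rule E8AtI_Z[where al = 0 and be = 0]; simp add: GMnZ_def less4 t1_def t2_def)
  apply (simp_all add: GMnZ_def evec_def ep_def)
  done

lemma GMn_11: "E8C (evec (GMnZ!11))"
  unfolding E8C_def
  apply (intro conjI)
  apply (simp add: GMnZ_def evec_def)
  apply (rule E8AtI_Z[where al = 0 and be = 0]; simp add: GMnZ_def less4 t1_def t2_def)
  apply (rule E8AtI_Z[where al = 0 and be = 0]; simp add: GMnZ_def less4 t1_def t2_def)
  apply (rule E8AtI_Z[where al = 0 and be = 0]; simp add: GMnZ_def less4 t1_def t2_def)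
  apply (simp_all add: GMnZ_def evec_def ep_def)
  done

lemma GMn_12: "E8C (evec (GMnZ!12))"
  unfolding E8C_def
  apply (intro conjI)
  apply (simp add: GMnZ_def evec_def)
  apply (rule E8AtI_Z[where al = 0 and be = 0]; simp add: GMnZ_def less4 t1_def t2_def)
  apply (rule E8AtI_Z[where al = 0 and be = 0]; simp add: GMnZ_def less4 t1_def t2_def)
  apply (rule E8AtI_Z[where al = 1 and be = 0]; simp add: GMnZ_def less4 t1_def t2_def)
  apply (simp_all add: GMnZ_def evec_def ep_def)
  done

lemma GMn_13: "E8C (evec (GMnZ!13))"
  unfolding E8C_def
  apply (intro conjI)
  apply (simp add: GMnZ_def evec_def)
  apply (rule E8AtI_Z[where al = 0 and be = 0]; simp add: GMnZ_def less4 t1_def t2_def)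
  apply (rule E8AtI_Z[where al = 0 and be = 0]; simp add: GMnZ_def less4 t1_def t2_def)
  apply (rule E8AtI_Z[where al = 0 and be = 1]; simp add: GMnZ_def less4 t1_def t2_def)
  apply (simp_all add: GMnZ_def evec_def ep_def)
  done

lemma GMn_14: "E8C (evec (GMnZ!14))"
  unfolding E8C_def
  apply (intro conjI)
  apply (simp add: GMnZ_def evec_def)
  apply (rule E8AtI_Z[where al = 0 and be = 0]; simp add: GMnZ_def less4 t1_def t2_def)
  apply (rule E8AtI_Z[where al = 0 and be = 0]; simp add: GMnZ_def less4 t1_def t2_def)
  apply (rule E8AtI_Z[where al = 0 and be = 0]; simp add: GMnZ_def less4 t1_def t2_def)
  apply (simp_all add: GMnZ_def evec_def ep_def)
  done

lemma GMn_15: "E8C (evec (GMnZ!15))"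
  unfolding E8C_def
  apply (intro conjI)
  apply (simp add: GMnZ_def evec_def)
  apply (rule E8AtI_Z[where al = 0 and be = 0]; simp add: GMnZ_def less4 t1_def t2_def)
  apply (rule E8AtI_Z[where al = 0 and be = 0]; simp add: GMnZ_def less4 t1_def t2_def)
  apply (rule E8AtI_Z[where al = 0 and be = 0]; simp add: GMnZ_def less4 t1_def t2_def)
  apply (simp_all add: GMnZ_def evec_def ep_def)
  done

lemma GMn_16: "E8C (evec (GMnZ!16))"
  unfolding E8C_def
  apply (intro conjI)
  apply (simp add: GMnZ_def evec_def)
  apply (rule E8AtI_Z[where al = 0 and be = 0]; simp add: GMnZ_def less4 t1_def t2_def)
  apply (rule E8AtI_Z[where al = 0 and be = 0]; simp add: GMnZ_def less4 t1_def t2_def)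
  apply (rule E8AtI_Z[where al = 0 and be = 0]; simp add: GMnZ_def less4 t1_def t2_def)
  apply (simp_all add: GMnZ_def evec_def ep_def)
  done

lemma GMn_17: "E8C (evec (GMnZ!17))"
  unfolding E8C_def
  apply (intro conjI)
  apply (simp add: GMnZ_def evec_def)
  apply (rule E8AtI_Z[where al = 0 and be = 0]; simp add: GMnZ_def less4 t1_def t2_def)
  apply (rule E8AtI_Z[where al = 0 and be = 0]; simp add: GMnZ_def less4 t1_def t2_def)
  apply (rule E8AtI_Z[where al = 0 and be = 0]; simp add: GMnZ_def less4 t1_def t2_def)
  apply (simp_all add: GMnZ_def evec_def ep_def)
  done

lemma GMn_18: "E8C (evec (GMnZ!18))"
  unfolding E8C_def
  apply (intro conjI)
  apply (simp add: GMnZ_def evec_def)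
  apply (rule E8AtI_Z[where al = 0 and be = 0]; simp add: GMnZ_def less4 t1_def t2_def)
  apply (rule E8AtI_Z[where al = 0 and be = 0]; simp add: GMnZ_def less4 t1_def t2_def)
  apply (rule E8AtI_Z[where al = 0 and be = 0]; simp add: GMnZ_def less4 t1_def t2_def)
  apply (simp_all add: GMnZ_def evec_def ep_def)
  done

lemma GMn_19: "E8C (evec (GMnZ!19))"
  unfolding E8C_def
  apply (intro conjI)
  apply (simp add: GMnZ_def evec_def)
  apply (rule E8AtI_Z[where al = 0 and be = 0]; simp add: GMnZ_def less4 t1_def t2_def)
  apply (rule E8AtI_Z[where al = 0 and be = 0]; simp add: GMnZ_def less4 t1_def t2_def)
  apply (rule E8AtI_Z[where al = 0 and be = 0]; simp add: GMnZ_def less4 t1_def t2_def)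
  apply (simp_all add: GMnZ_def evec_def ep_def)
  done

lemma GLn_all: "\<forall>g\<in>set GLn. LbigC g"
  using GLn_0 GLn_1 GLn_2 GLn_3 GLn_4 GLn_5 GLn_6 GLn_7 GLn_8 GLn_9 GLn_10 GLn_11 GLn_12 GLn_13 GLn_14 GLn_15 GLn_16 GLn_17 GLn_18 GLn_19 GLn_20 by (auto simp: in_set_conv_nth less21 GLn_nth)
lemma GMn_all: "\<forall>g\<in>set GMn. E8C g"
  using GMn_0 GMn_1 GMn_2 GMn_3 GMn_4 GMn_5 GMn_6 GMn_7 GMn_8 GMn_9 GMn_10 GMn_11 GMn_12 GMn_13 GMn_14 GMn_15 GMn_16 GMn_17 GMn_18 GMn_19 by (auto simp: in_set_conv_nth less20 GMn_nth)

lemma sum21: "(\<Sum>i<(21::nat). f i) = f 0 + f 1 + f 2 + f 3 + f 4 + f 5 + f 6 + f 7 + f 8 + f 9 + f 10 + f 11 + f 12 + f 13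
  + f 14 + f 15 + f 16 + f 17 + f 18 + f 19 + (f 20 :: 'a::comm_monoid_add)"
  by (simp add: eval_nat_numeral ac_simps)
lemma sum20: "(\<Sum>i<(20::nat). f i) = f 0 + f 1 + f 2 + f 3 + f 4 + f 5 + f 6 + f 7 + f 8 + f 9 + f 10 + f 11 + f 12 + f 13
  + f 14 + f 15 + f 16 + f 17 + f 18 + (f 19 :: 'a::comm_monoid_add)"
  by (simp add: eval_nat_numeral ac_simps)

lemma GLn_lit: "GLn = map evec GLnZ" by (simp add: GLn_def)

lemma Lbig_span:
  assumes "LbigC v"
  shows "\<exists>x. length x = 21 \<and> set x \<subseteq> Eis \<and> v = lc x GLn"
proof -
  from assms have len: "length v = 14" and h: "v!12 \<in> Eis" "v!13 \<in> Eis" and la: "LeechAt v"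
    by (auto simp: LbigC_def)
  from la obtain m a z e where zE: "\<forall>i<12. z i \<in> Eis" and eE: "e \<in> Eis"
    and S: "(\<Sum>i<12. z i) = of_int m + theta * e"
    and V: "\<forall>i<12. v!i = of_int m + theta * of_int (cw a i) + 3 * z i"
    unfolding LeechAt_def by blast
  have z0: "z 0 = of_int m + theta * e - (z 1 + z 2 + z 3 + z 4 + z 5 + z 6 + z 7 + z 8 + z 9 + z 10 + z 11)"
    using S by (simp add: sum12 algebra_simps)
  define x where "x = [of_int m, of_int (a 0), of_int (a 1), of_int (a 2), of_int (a 3), of_int (a 4), of_int (a 5), e,
     z 1, z 2, z 3, z 4, z 5, z 6, z 7, z 8, z 9, z 10, z 11, v!12, v!13]"
  have "length x = 21" by (simp add: x_def)
  moreover have "set x \<subseteq> Eis" using zE eE h by (simp add: x_def)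
  moreover have "v = lc x GLn"
  proof (rule nth_equalityI)
    show "length v = length (lc x GLn)" using len by simp
    fix j assume "j < length v"
    hence j: "j < 14" using len by simp
    have lcj: "lc x GLn ! j = (\<Sum>k<21. x!k * ep (GLnZ!k!j))"
      using j by (simp add: nth_lc GLn_lit evec_def GLnZ_facts)
    show "v ! j = lc x GLn ! j"
      unfolding lcj using j V
      unfolding less14
      apply (elim disjE)
      apply (simp_all add: z0 sum21 x_def GLnZ_def emb_def cw_def sum6 golayG_eq theta_eq algebra_simps)
      done
  qed
  ultimately show ?thesis by blast
qed

lemma E8At_dec:
  assumes "E8At v off"
  shows "\<exists>al be E. (\<forall>i<4. E i \<in> Eis) \<and> (\<forall>i<4. v!(off+i) = of_int (al * t1!i + be * t2!i) + theta * E i)"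
proof -
  from assms obtain al be where c: "\<forall>i<4. cong_theta (v!(off+i)) (of_int (al * t1!i + be * t2!i))"
    unfolding E8At_def by blast
  have "\<forall>i. \<exists>e. i < 4 \<longrightarrow> e \<in> Eis \<and> v!(off+i) - of_int (al * t1!i + be * t2!i) = theta * e"
    using c unfolding cong_theta_def by blast
  then obtain E where E: "\<forall>i. i < 4 \<longrightarrow> E i \<in> Eis \<and> v!(off+i) - of_int (al * t1!i + be * t2!i) = theta * E i"
    by metis
  show ?thesis
    by (rule exI[where x = al], rule exI[where x = be], rule exI[where x = E]) (use E in \<open>auto simp: algebra_simps\<close>)
qed

lemma GMn_lit: "GMn = map evec GMnZ" by (simp add: GMn_def)

lemma E8_span:
  assumes "E8C v"
  shows "\<exists>x. length x = 20 \<and> set x \<subseteq> Eis \<and> v = lc x GMn"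
proof -
  from assms have len: "length v = 14" and h: "v!12 \<in> Eis" "v!13 \<in> Eis"
    and e: "E8At v 0" "E8At v 4" "E8At v 8"
    by (auto simp: E8C_def)
  obtain a0 b0 E0 where E0: "\<forall>i<4. E0 i \<in> Eis" "\<forall>i<4. v!(0+i) = of_int (a0 * t1!i + b0 * t2!i) + theta * E0 i"
    using E8At_dec[OF e(1)] by blast
  obtain a4 b4 E4 where E4: "\<forall>i<4. E4 i \<in> Eis" "\<forall>i<4. v!(4+i) = of_int (a4 * t1!i + b4 * t2!i) + theta * E4 i"
    using E8At_dec[OF e(2)] by blast
  obtain a8 b8 E8 where E8: "\<forall>i<4. E8 i \<in> Eis" "\<forall>i<4. v!(8+i) = of_int (a8 * t1!i + b8 * t2!i) + theta * E8 i"
    using E8At_dec[OF e(3)] by blast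
  define x where "x = [of_int a0, of_int b0, E0 0, E0 1, E0 2, E0 3, of_int a4, of_int b4, E4 0, E4 1, E4 2, E4 3,
     of_int a8, of_int b8, E8 0, E8 1, E8 2, E8 3, v!12, v!13]"
  have "length x = 20" by (simp add: x_def)
  moreover have "set x \<subseteq> Eis" using E0 E4 E8 h by (simp add: x_def)
  moreover have "v = lc x GMn"
  proof (rule nth_equalityI)
    show "length v = length (lc x GMn)" using len by simp
    fix j assume "j < length v"
    hence j: "j < 14" using len by simp
    have lcj: "lc x GMn ! j = (\<Sum>k<20. x!k * ep (GMnZ!k!j))"
      using j by (simp add: nth_lc GMn_lit evec_def GMnZ_facts)
    have V: "v!0 = of_int (a0 * t1!0 + b0 * t2!0) + theta * E0 0"
      "v!1 = of_int (a0 * t1!1 + b0 * t2!1) + theta * E0 1"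
      "v!2 = of_int (a0 * t1!2 + b0 * t2!2) + theta * E0 2"
      "v!3 = of_int (a0 * t1!3 + b0 * t2!3) + theta * E0 3"
      "v!4 = of_int (a4 * t1!0 + b4 * t2!0) + theta * E4 0"
      "v!5 = of_int (a4 * t1!1 + b4 * t2!1) + theta * E4 1"
      "v!6 = of_int (a4 * t1!2 + b4 * t2!2) + theta * E4 2"
      "v!7 = of_int (a4 * t1!3 + b4 * t2!3) + theta * E4 3"
      "v!8 = of_int (a8 * t1!0 + b8 * t2!0) + theta * E8 0"
      "v!9 = of_int (a8 * t1!1 + b8 * t2!1) + theta * E8 1"
      "v!10 = of_int (a8 * t1!2 + b8 * t2!2) + theta * E8 2"
      "v!11 = of_int (a8 * t1!3 + b8 * t2!3) + theta * E8 3"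
      using E0(2) E4(2) E8(2) by (auto dest: spec[where x = 0] spec[where x = 1] spec[where x = 2] spec[where x = 3])
    have V1: "v ! Suc 0 = of_int (a0 * t1!1 + b0 * t2!1) + theta * E0 (Suc 0)" using V(2) by simp
    show "v ! j = lc x GMn ! j"
      unfolding lcj using j
      unfolding less14
      apply (elim disjE)
      apply (simp_all add: V V1 sum20 x_def GMnZ_def emb_def t1_def t2_def theta_eq algebra_simps)
      done
  qed
  ultimately show ?thesis by blast
qed

lemma evec_Eis: "set (evec r) \<subseteq> Eis" by (auto simp: evec_def ep_def)

lemma fmap_into: assumes "v \<in> Lbig" shows "fmap v \<in> E8cubeH"
proof -
  from assms have "LbigC v" by (simp add: Lbig_iff)
  then obtain x where x: "length x = 21" "set x \<subseteq> Eis" and v: "v = lc x GLn" using Lbig_span by blast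
  have "\<forall>g\<in>set (map fmap GLn). E8C g"
  proof
    fix g assume "g \<in> set (map fmap GLn)"
    then obtain k where k: "k < 21" and g: "g = fmap (GLn!k)" by (auto simp: in_set_conv_nth)
    have "g = lc (evec (XZ!k)) GMn" using fmap_GLn[OF k] g by simp
    moreover have "length (evec (XZ!k)) = length GMn" using k XZ_facts by (simp add: evec_def)
    ultimately show "E8C g" using E8C_lc[OF GMn_all _ evec_Eis] by simp
  qed
  hence "E8C (lc x (map fmap GLn))" using x by (intro E8C_lc) auto
  thus ?thesis unfolding v fmap_lc by (simp add: E8cubeH_iff)
qed

lemma gmap_into: assumes "v \<in> E8cubeH" shows "gmap v \<in> Lbig"
proof -
  from assms have "E8C v" by (simp add: E8cubeH_iff)
  then obtain x where x: "length x = 20" "set x \<subseteq> Eis" and v: "v = lc x GMn" using E8_span by blast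
  have "\<forall>g\<in>set (map gmap GMn). LbigC g"
  proof
    fix g assume "g \<in> set (map gmap GMn)"
    then obtain k where k: "k < 20" and g: "g = gmap (GMn!k)" by (auto simp: in_set_conv_nth)
    have "g = lc (evec (YZ!k)) GLn" using gmap_GMn[OF k] g by simp
    moreover have "length (evec (YZ!k)) = length GLn" using k YZ_facts by (simp add: evec_def)
    ultimately show "LbigC g" using LbigC_lc[OF GLn_all _ evec_Eis] by simp
  qed
  hence "LbigC (lc x (map gmap GMn))" using x by (intro LbigC_lc) auto
  thus ?thesis unfolding v gmap_lc by (simp add: Lbig_iff)
qed

lemma Lbig_len: "v \<in> Lbig \<Longrightarrow> length v = 14" by (simp add: Lbig_iff LbigC_def)
lemma E8cubeH_len: "v \<in> E8cubeH \<Longrightarrow> length v = 14" by (simp add: E8cubeH_iff E8C_def)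

theorem mainTheorem3:
  shows "isometric Lbig Lbig_form E8cubeH E8cubeH_form"
  unfolding isometric_def
proof (intro exI[where x = fmap] conjI ballI)
  show "bij_betw fmap Lbig E8cubeH"
    by (rule bij_betw_byWitness[where f' = gmap])
       (auto simp: gmap_fmap fmap_gmap Lbig_len E8cubeH_len fmap_into gmap_into)
next
  fix u v a b assume "u \<in> Lbig" "v \<in> Lbig" "a \<in> Eis" "b \<in> Eis"
  thus "fmap (vadd (vscale a u) (vscale b v)) = vadd (vscale a (fmap u)) (vscale b (fmap v))"
    by (simp add: fmap_linear Lbig_len)
next
  fix u v assume "u \<in> Lbig" "v \<in> Lbig"
  thus "E8cubeH_form (fmap u) (fmap v) = Lbig_form u v"
    by (simp add: fmap_form Lbig_len)
qed

end
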